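(* There exists a family $(C_k)_{k\ge1}$ of real non-singular $k$-sections $C_k\subset\mathbb{C}^2$ such that, for every $k\ge1$, the closure of $\mathbb{R}C_k$ in $\mathbb{R}\mathcal O_{\mathbb{C}P^1}(4)$ is connected, and the number $r_k$ of real vertical lines $\{u=\mathrm{const}\}$ tangent to $C_k$ satisfies $r_k=4k^2+O(k)$.
   Context: A non-singular $k$-section in $\mathbb{C}^2$ is a curve defined by $P(u,w)=\sum a_{i,j}u^iw^j$ whose Newton polygon (convex hull of $\{(i,j):a_{i,j}\neq0\}$) is the triangle with vertices $(0,0),(4k,0),(0,k)$, which is non-singular in $\mathbb{C}^2$, and such that $\sum_{i+4j=4k}a_{i,j}u^iw^j$ has no multiple factors; it is real if $P$ is real. $\mathbb{C}^2$ is viewed as the chart $v=1$ of the total space $\mathcal O_{\mathbb{C}P^1}(4)=\{[u:v:w]\in\mathbb{C}P^2(1,1,4):(u,v)\neq(0,0)\}$, with real part $\mathbb{R}\mathcal O_{\mathbb{C}P^1}(4)$. *)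

theory Defs
  imports "HOL-Analysis.Analysis" "HOL-Computational_Algebra.Polynomial" "HOL-Computational_Algebra.Squarefree"
begin

text \<open>Bivariate polynomials P(u,w) are represented as elements of 'a poly poly:
  the outer variable is w, the inner one is u, so that the coefficient a(i,j) of
  u^i w^j is coeff (coeff P j) i.\<close>

definition bcoeff :: "'a::zero poly poly \<Rightarrow> nat \<Rightarrow> nat \<Rightarrow> 'a" where
  "bcoeff P i j = coeff (coeff P j) i"

definition beval :: "'a::comm_semiring_0 poly poly \<Rightarrow> 'a \<Rightarrow> 'a \<Rightarrow> 'a" where
  "beval P u w = poly (map_poly (\<lambda>c. poly c u) P) w"

definition bderiv_u :: "'a::idom poly poly \<Rightarrow> 'a poly poly" where
  "bderiv_u P = map_poly pderiv P"

definition bderiv_w :: "'a::idom poly poly \<Rightarrow> 'a poly poly" where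
  "bderiv_w P = pderiv P"

definition complexify :: "real poly poly \<Rightarrow> complex poly poly" where
  "complexify P = map_poly (map_poly complex_of_real) P"

definition newton_polygon :: "'a::zero poly poly \<Rightarrow> (real \<times> real) set" where
  "newton_polygon P = convex hull {(real i, real j) | i j. bcoeff P i j \<noteq> 0}"

definition principal_part :: "nat \<Rightarrow> 'a::zero poly poly \<Rightarrow> 'a poly poly" where
  "principal_part k P =
     Poly (map (\<lambda>j. monom (bcoeff P (4*k - 4*j) j) (4*k - 4*j)) [0..<k+1])"

definition nonsingular_C2 :: "complex poly poly \<Rightarrow> bool" where
  "nonsingular_C2 Q \<longleftrightarrow>
     (\<forall>u w. beval Q u w = 0 \<longrightarrow> beval (bderiv_u Q) u w \<noteq> 0 \<or> beval (bderiv_w Q) u w \<noteq> 0)"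

definition real_nonsingular_k_section :: "nat \<Rightarrow> real poly poly \<Rightarrow> bool" where
  "real_nonsingular_k_section k P \<longleftrightarrow>
     newton_polygon P = convex hull {(0,0), (real (4*k), 0), (0, real k)} \<and>
     nonsingular_C2 (complexify P) \<and>
     squarefree (principal_part k (complexify P))"

text \<open>Real part RC = C \<inter> R^2 in the chart v = 1\<close>
definition real_part :: "real poly poly \<Rightarrow> (real \<times> real) set" where
  "real_part P = {(u, w). beval P u w = 0}"

text \<open>Real part of O(4): triples (u,v,w) with (u,v) \<noteq> (0,0), modulo
  (u,v,w) ~ (l u, l v, l^4 w), l real nonzero.  The following map is invariant under
  this action and induces a homeomorphism of RO(4) onto the closed subset
  S^1 \<times> R of R^3; we use it to carry the topology of RO(4).\<close>
definition RO4_embed :: "real \<times> real \<times> real \<Rightarrow> real \<times> real \<times> real" where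
  "RO4_embed = (\<lambda>(u, v, w).
     ((u^2 - v^2) / (u^2 + v^2), 2 * u * v / (u^2 + v^2), w / (u^2 + v^2)^2))"

definition closure_real_part_RO4 :: "real poly poly \<Rightarrow> (real \<times> real \<times> real) set" where
  "closure_real_part_RO4 P = closure ((\<lambda>(u, w). RO4_embed (u, 1, w)) ` real_part P)"

definition num_real_vertical_tangents :: "real poly poly \<Rightarrow> nat" where
  "num_real_vertical_tangents P =
     card {c :: real. \<exists>w :: complex.
        beval (complexify P) (complex_of_real c) w = 0 \<and>
        beval (bderiv_w (complexify P)) (complex_of_real c) w = 0}"

end

theory Submission
  imports Defs
begin

fun cheb :: "nat \<Rightarrow> real poly" where
  "cheb 0 = 1"
| "cheb (Suc 0) = [:0, 1:]"
| "cheb (Suc (Suc n)) = [:0, 2:] * cheb (Suc n) - cheb n"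

lemma cheb_cos: "poly (cheb n) (cos x) = cos (real n * x)"
proof (induction n rule: cheb.induct)
  case (3 n)
  have "cos (real (Suc (Suc n)) * x) = 2 * cos x * cos (real (Suc n) * x) - cos (real n * x)"
  proof -
    have a: "real (Suc (Suc n)) * x = real (Suc n) * x + x" by (simp add: algebra_simps)
    have b: "real n * x = real (Suc n) * x - x" by (simp add: algebra_simps)
    show ?thesis unfolding a b cos_add cos_diff by simp
  qed
  then show ?case using 3 by simp
qed auto

lemma cheb_cosh: "poly (cheb n) (cosh x) = cosh (real n * x)"
proof (induction n rule: cheb.induct)
  case (3 n)
  have "cosh (real (Suc (Suc n)) * x) = 2 * cosh x * cosh (real (Suc n) * x) - cosh (real n * x)"
  proof -
    have a: "real (Suc (Suc n)) * x = real (Suc n) * x + x" by (simp add: algebra_simps)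
    have b: "real n * x = real (Suc n) * x - x" by (simp add: algebra_simps)
    show ?thesis unfolding a b cosh_add cosh_diff by simp
  qed
  then show ?case using 3 by simp
qed auto

lemma cheb_minus: "poly (cheb n) (- x) = (-1) ^ n * poly (cheb n) x"
  by (induction n rule: cheb.induct) (auto simp: algebra_simps)

lemma degree_cheb: "degree (cheb n) = n"
proof (induction n rule: cheb.induct)
  case (3 n)
  have nz: "cheb (Suc n) \<noteq> 0" using 3(1) by (metis Zero_not_Suc degree_0)
  have "degree ([:0, 2:] * cheb (Suc n)) = Suc (Suc n)"
    using nz 3(1) by (subst degree_mult_eq) auto
  then show ?case using 3 by (simp add: degree_add_eq_left[of "- cheb n", simplified])
qed auto

lemma cheb_nz: "cheb n \<noteq> 0"
  by (metis cheb.simps(1) degree_0 degree_cheb one_neq_zero)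

lemma cheb_bound: "-1 \<le> x \<Longrightarrow> x \<le> 1 \<Longrightarrow> \<bar>poly (cheb n) x\<bar> \<le> 1"
  using cheb_cos[of n "arccos x"] by (simp add: cos_arccos)

lemma cheb_ge: "1 \<le> x \<Longrightarrow> 1 \<le> n \<Longrightarrow> x \<le> poly (cheb n) x"
proof -
  assume x: "1 \<le> x" and n: "1 \<le> n"
  have "poly (cheb n) x = cosh (real n * arcosh x)" using cheb_cosh[of n "arcosh x"] x by simp
  moreover have "cosh (arcosh x) \<le> cosh (real n * arcosh x)"
  proof (subst cosh_real_nonneg_le_iff)
    show "arcosh x \<le> real n * arcosh x" using x n
    proof -
      have "0 \<le> arcosh x" using x by simp
      moreover have "1 \<le> real n" using n by simp
      ultimately show ?thesis using mult_right_mono[of 1 "real n" "arcosh x"] by simp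
    qed
  qed (use x in auto)
  ultimately show ?thesis using x by simp
qed

lemma cheb_mono: "1 \<le> x \<Longrightarrow> x < y \<Longrightarrow> 1 \<le> n \<Longrightarrow> poly (cheb n) x < poly (cheb n) y"
proof -
  assume x: "1 \<le> x" and xy: "x < y" and n: "1 \<le> n"
  have "poly (cheb n) x = cosh (real n * arcosh x)" using cheb_cosh[of n "arcosh x"] x by simp
  moreover have "poly (cheb n) y = cosh (real n * arcosh y)" using cheb_cosh[of n "arcosh y"] x xy by simp
  moreover have "arcosh x < arcosh y" using x xy by simp
  moreover have "0 \<le> arcosh x" using x by simp
  ultimately show ?thesis using n
    by (simp add: cosh_real_nonneg_less_iff)
qed

lemma poly_of_real_map: "poly (map_poly of_real p) (of_real x :: complex) = of_real (poly p x)"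
  by (induction p) (auto simp: map_poly_pCons)

lemma pderiv_of_real_map: "pderiv (map_poly (of_real :: real \<Rightarrow> complex) p) = map_poly of_real (pderiv p)"
  by (rule poly_eqI) (simp add: coeff_pderiv coeff_map_poly)

lemma interior_max_crit:
  fixes p :: "real poly"
  assumes "a \<le> z" "z \<le> b" "\<forall>y. a \<le> y \<and> y \<le> b \<longrightarrow> poly p y \<le> poly p z"
    "poly p a < poly p z" "poly p b < poly p z"
  shows "a < z \<and> z < b \<and> poly (pderiv p) z = 0"
proof -
  have az: "a < z" using assms by (metis order.order_iff_strict order_less_irrefl)
  have zb: "z < b" using assms by (metis order.order_iff_strict order_less_irrefl)
  have d: "0 < min (z - a) (b - z)" using az zb by simp
  have le: "\<forall>y. \<bar>z - y\<bar> < min (z - a) (b - z) \<longrightarrow> poly p y \<le> poly p z"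
    using assms(3) by (auto simp: abs_if split: if_splits)
  have "poly (pderiv p) z = 0" by (rule DERIV_local_max[OF poly_DERIV d le])
  then show ?thesis using az zb by simp
qed

definition lo :: "nat \<Rightarrow> nat \<Rightarrow> real" where "lo n j = cos ((real j + 1/2) * pi / real n)"
definition hi :: "nat \<Rightarrow> nat \<Rightarrow> real" where "hi n j = cos ((real j - 1/2) * pi / real n)"
definition xx :: "nat \<Rightarrow> nat \<Rightarrow> real" where "xx n j = cos (real j * pi / real n)"

lemma cos_less_cos': "0 \<le> a \<Longrightarrow> a < b \<Longrightarrow> b \<le> pi \<Longrightarrow> cos b < cos a"
  by (rule cos_monotone_0_pi) auto

lemma cos_le_cos': "0 \<le> a \<Longrightarrow> a \<le> b \<Longrightarrow> b \<le> pi \<Longrightarrow> cos b \<le> cos a"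
  by (rule cos_monotone_0_pi_le) auto

lemma frac_pi_bounds:
  assumes "0 \<le> c" "c \<le> real n" "1 \<le> n"
  shows "0 \<le> c * pi / real n" "c * pi / real n \<le> pi"
proof -
  have "c * pi \<le> real n * pi" using assms by (intro mult_right_mono) auto
  then show "c * pi / real n \<le> pi" using assms by (simp add: divide_le_eq)
  show "0 \<le> c * pi / real n" using assms by simp
qed

lemma lo_hi_order:
  assumes "1 \<le> j" "j + 1 \<le> n"
  shows "lo n j < xx n j" "xx n j < hi n j"
proof -
  have n: "1 \<le> n" using assms by simp
  have rn: "real j + 1/2 \<le> real n" using assms by (simp add: of_nat_add[symmetric] del: of_nat_add)
  have np: "0 < real n" using n by simp
  show "lo n j < xx n j" unfolding lo_def xx_def
  proof (rule cos_less_cos')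
    show "0 \<le> real j * pi / real n" "real j * pi / real n < (real j + 1 / 2) * pi / real n"
      using np by (auto simp: divide_strict_right_mono)
    show "(real j + 1 / 2) * pi / real n \<le> pi" using frac_pi_bounds[OF _ rn n] by simp
  qed
  show "xx n j < hi n j" unfolding hi_def xx_def
  proof (rule cos_less_cos')
    show "0 \<le> (real j - 1/2) * pi / real n" using frac_pi_bounds[of "real j - 1/2" n] assms by simp
    show "(real j - 1/2) * pi / real n < real j * pi / real n"
      using np by (auto simp: divide_strict_right_mono)
    show "real j * pi / real n \<le> pi" using frac_pi_bounds[of "real j" n] assms by simp
  qed
qed

lemma cos_half_odd: "cos ((real j + 1/2) * pi) = 0"
proof -
  have "(real j + 1/2) * pi = real j * pi + pi / 2" by (simp add: algebra_simps)
  then show ?thesis by (simp add: cos_add)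
qed

lemma cheb_at: assumes "1 \<le> n" shows "poly (cheb n) (cos (c * pi / real n)) = cos (c * pi)"
  using assms by (simp add: cheb_cos)

lemma cheb_lo: "1 \<le> n \<Longrightarrow> poly (cheb n) (lo n j) = 0"
  unfolding lo_def by (simp add: cheb_at cos_half_odd)

lemma cheb_hi: "1 \<le> n \<Longrightarrow> 1 \<le> j \<Longrightarrow> poly (cheb n) (hi n j) = 0"
  unfolding hi_def using cos_half_odd[of "j - 1"] by (simp add: cheb_at of_nat_diff)

lemma cheb_xx: "1 \<le> n \<Longrightarrow> poly (cheb n) (xx n j) = (-1) ^ j"
  unfolding xx_def by (simp add: cheb_at)

lemma cos_bound1: "-1 \<le> cos x \<and> cos x \<le> (1::real)" by simp

lemma abs_t_le: "0 \<le> (t::real) \<Longrightarrow> -1 \<le> a \<Longrightarrow> a \<le> 1 \<Longrightarrow> \<bar>t * a\<bar> \<le> t"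
  using mult_left_mono[of "\<bar>a\<bar>" 1 t] by (simp add: abs_mult)

definition QQ :: "nat \<Rightarrow> real \<Rightarrow> real poly" where "QQ n t = cheb n + [:0, t:]"

lemma poly_QQ: "poly (QQ n t) y = poly (cheb n) y + t * y"
  by (simp add: QQ_def)

lemma crit_exists:
  assumes n: "1 \<le> n" and t: "0 \<le> t" "t \<le> 1/4" and j: "1 \<le> j" "j + 1 \<le> n"
  shows "\<exists>z. lo n j < z \<and> z < hi n j \<and> poly (pderiv (QQ n t)) z = 0 \<and>
     (even j \<longrightarrow> 1 + t * xx n j \<le> poly (QQ n t) z \<and> poly (QQ n t) z \<le> 1 + t * z) \<and>
     (odd j \<longrightarrow> -1 + t * z \<le> poly (QQ n t) z \<and> poly (QQ n t) z \<le> -1 + t * xx n j)"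
proof -
  let ?Q = "QQ n t"
  have ord: "lo n j < xx n j" "xx n j < hi n j" using lo_hi_order[OF j] by auto
  have loB: "-1 \<le> lo n j" "lo n j \<le> 1" unfolding lo_def by auto
  have hiB: "-1 \<le> hi n j" "hi n j \<le> 1" unfolding hi_def by auto
  have xxB: "-1 \<le> xx n j" "xx n j \<le> 1" unfolding xx_def by auto
  have Qlo: "poly ?Q (lo n j) = t * lo n j" using cheb_lo[OF n] by (simp add: poly_QQ)
  have Qhi: "poly ?Q (hi n j) = t * hi n j" using cheb_hi[OF n j(1)] by (simp add: poly_QQ)
  have Qxx: "poly ?Q (xx n j) = (-1)^j + t * xx n j" using cheb_xx[OF n] by (simp add: poly_QQ)
  have cont: "continuous_on {lo n j..hi n j} (poly ?Q)" by (intro continuous_intros)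
  have cont2: "continuous_on {lo n j..hi n j} (poly (- ?Q))" by (intro continuous_intros)
  have ne: "{lo n j..hi n j} \<noteq> {}" using ord by auto
  have zb: "\<And>z. lo n j \<le> z \<Longrightarrow> z \<le> hi n j \<Longrightarrow> \<bar>poly (cheb n) z\<bar> \<le> 1"
    using loB hiB by (intro cheb_bound) auto
  have tlo: "\<bar>t * lo n j\<bar> \<le> t" "\<bar>t * hi n j\<bar> \<le> t" "\<bar>t * xx n j\<bar> \<le> t"
    using loB hiB xxB t by (auto intro!: abs_t_le)
  show ?thesis
  proof (cases "even j")
    case True
    obtain z where z: "z \<in> {lo n j..hi n j}" "\<forall>y\<in>{lo n j..hi n j}. poly ?Q y \<le> poly ?Q z"
      using continuous_attains_sup[OF compact_Icc ne cont] by blast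
    have ge: "poly ?Q z \<ge> 1 + t * xx n j" using z(2)[rule_format, of "xx n j"] ord Qxx True by auto
    have "lo n j < z \<and> z < hi n j \<and> poly (pderiv ?Q) z = 0"
      by (rule interior_max_crit) (use z ge Qlo Qhi tlo t in auto)
    moreover have "poly ?Q z \<le> 1 + t * z" using zb[of z] z(1) by (auto simp: poly_QQ)
    ultimately show ?thesis using ge True by blast
  next
    case False
    obtain z where z: "z \<in> {lo n j..hi n j}" "\<forall>y\<in>{lo n j..hi n j}. poly (- ?Q) y \<le> poly (- ?Q) z"
      using continuous_attains_sup[OF compact_Icc ne cont2] by blast
    have ge: "poly ?Q z \<le> -1 + t * xx n j" using z(2)[rule_format, of "xx n j"] ord Qxx False by auto
    have "lo n j < z \<and> z < hi n j \<and> poly (pderiv (- ?Q)) z = 0"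
      by (rule interior_max_crit) (use z ge Qlo Qhi tlo t in auto)
    moreover have "-1 + t * z \<le> poly ?Q z" using zb[of z] z(1) by (auto simp: poly_QQ)
    ultimately show ?thesis using ge False by (auto simp: pderiv_minus)
  qed
qed

definition critP :: "nat \<Rightarrow> real \<Rightarrow> nat \<Rightarrow> real \<Rightarrow> bool" where
  "critP n t j z \<longleftrightarrow> lo n j < z \<and> z < hi n j \<and> poly (pderiv (QQ n t)) z = 0 \<and>
     (even j \<longrightarrow> 1 + t * xx n j \<le> poly (QQ n t) z \<and> poly (QQ n t) z \<le> 1 + t * z) \<and>
     (odd j \<longrightarrow> -1 + t * z \<le> poly (QQ n t) z \<and> poly (QQ n t) z \<le> -1 + t * xx n j)"

definition critpt :: "nat \<Rightarrow> real \<Rightarrow> nat \<Rightarrow> real" where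
  "critpt n t j = (SOME z. critP n t j z)"

lemma critpt:
  assumes "1 \<le> n" "0 \<le> t" "t \<le> 1/4" "1 \<le> j" "j + 1 \<le> n"
  shows "critP n t j (critpt n t j)"
  unfolding critpt_def by (rule someI_ex) (use crit_exists[OF assms] in \<open>simp add: critP_def\<close>)

lemma hi_le_lo: assumes "j < j'" "j' + 1 \<le> n" shows "hi n j' \<le> lo n j"
proof -
  have n: "0 < real n" using assms by simp
  have a: "(real j + 1/2) \<le> (real j' - 1/2)" using assms by (simp add: of_nat_less_iff[symmetric] del: of_nat_less_iff)
  have rn: "real j' - 1/2 \<le> real n" using assms by (simp add: of_nat_add[symmetric] del: of_nat_add)
  show ?thesis unfolding hi_def lo_def
  proof (rule cos_le_cos')
    show "0 \<le> (real j + 1 / 2) * pi / real n" using n by simp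
    show "(real j + 1 / 2) * pi / real n \<le> (real j' - 1 / 2) * pi / real n"
      using a n by (intro divide_right_mono mult_right_mono) auto
    show "(real j' - 1 / 2) * pi / real n \<le> pi" using frac_pi_bounds[of "real j' - 1/2" n] rn assms by simp
  qed
qed

lemma critpt_less:
  assumes "1 \<le> n" "0 \<le> t" "t \<le> 1/4" "1 \<le> j" "j < j'" "j' + 1 \<le> n"
  shows "critpt n t j' < critpt n t j"
proof -
  have "critP n t j (critpt n t j)" by (rule critpt) (use assms in auto)
  moreover have "critP n t j' (critpt n t j')" by (rule critpt) (use assms in auto)
  ultimately show ?thesis using hi_le_lo[of j j' n] assms unfolding critP_def by linarith
qed

lemma critpt_inj:
  assumes "1 \<le> n" "0 \<le> t" "t \<le> 1/4"
  shows "inj_on (critpt n t) {1..n-1}"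
proof (rule inj_onI)
  fix j j' assume jj: "j \<in> {1..n-1}" "j' \<in> {1..n-1}" "critpt n t j = critpt n t j'"
  then have "j + 1 \<le> n" "j' + 1 \<le> n" "1 \<le> j" "1 \<le> j'" using assms(1) by auto
  then show "j = j'" using critpt_less[OF assms, of j j'] critpt_less[OF assms, of j' j] jj(3)
    by (cases j j' rule: linorder_cases) auto
qed

lemma degree_QQ: assumes "1 \<le> n" "0 \<le> t" shows "degree (QQ n t) = n"
proof (cases "n = 1")
  case True
  have "QQ n t = [:0, 1 + t:]" using True by (simp add: QQ_def)
  moreover have "1 + t \<noteq> 0" using assms by simp
  ultimately show ?thesis using True by simp
next
  case False
  then have "degree [:0, t:] < degree (cheb n)" using assms by (auto simp: degree_cheb)
  then show ?thesis unfolding QQ_def by (simp add: degree_add_eq_left degree_cheb)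
qed

lemma crit_all:
  assumes n: "1 \<le> n" and t: "0 \<le> t" "t \<le> 1/4"
  shows "{w::complex. poly (map_poly of_real (pderiv (QQ n t))) w = 0} = (\<lambda>j. of_real (critpt n t j)) ` {1..n-1}"
proof -
  let ?p = "map_poly (of_real :: real \<Rightarrow> complex) (pderiv (QQ n t))"
  have dp: "degree ?p = n - 1"
    by (subst degree_map_poly) (auto simp: degree_pderiv degree_QQ[OF n t(1)])
  have pnz: "pderiv (QQ n t) \<noteq> 0" using degree_QQ[OF n t(1)] n by (auto simp: pderiv_eq_0_iff)
  have nz: "?p \<noteq> 0" using pnz by (simp add: map_poly_eq_0_iff)
  have sub: "(\<lambda>j. of_real (critpt n t j)) ` {1..n-1} \<subseteq> {w. poly ?p w = 0}"
  proof
    fix w assume "w \<in> (\<lambda>j. complex_of_real (critpt n t j)) ` {1..n-1}"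
    then obtain j where j: "j \<in> {1..n-1}" "w = of_real (critpt n t j)" by auto
    have "critP n t j (critpt n t j)" by (rule critpt) (use j n t in auto)
    then show "w \<in> {w. poly ?p w = 0}" using j by (simp add: poly_of_real_map critP_def)
  qed
  have card1: "card ((\<lambda>j. complex_of_real (critpt n t j)) ` {1..n-1}) = n - 1"
  proof -
    have "inj_on (\<lambda>j. complex_of_real (critpt n t j)) {1..n-1}"
      using critpt_inj[OF n t] by (auto simp: inj_on_def)
    then show ?thesis by (simp add: card_image)
  qed
  have fin: "finite {w. poly ?p w = 0}" using nz by (rule poly_roots_finite)
  have card2: "card {w. poly ?p w = 0} \<le> n - 1" using card_poly_roots_bound[OF nz] dp by simp
  show ?thesis using card_subset_eq[OF fin sub] card1 card2 card_mono[OF fin sub] by simp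
qed

definition sep :: "'a::comm_ring_1 poly \<Rightarrow> 'a poly \<Rightarrow> 'a poly poly" where
  "sep f g = map_poly (\<lambda>c. [:c:]) f - [:g:]"

lemma coeff_sep: "coeff (sep f g) j = [:coeff f j:] - (if j = 0 then g else 0)"
  by (simp add: sep_def coeff_map_poly coeff_pCons split: nat.split)

lemma bcoeff_sep: "bcoeff (sep f g) i j = (if i = 0 then coeff f j else 0) - (if j = 0 then coeff g i else 0)"
  by (simp add: bcoeff_def coeff_sep coeff_pCons split: nat.split)

lemma beval_sep: "beval (sep f g) u w = poly f w - poly g u"
proof -
  have "map_poly (\<lambda>c. poly c u) (sep f g) = f - [:poly g u:]"
    by (rule poly_eqI) (simp add: coeff_map_poly coeff_sep coeff_pCons split: nat.split)
  then show ?thesis by (simp add: beval_def)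
qed

lemma pderiv_const': "pderiv [:c:] = 0"
  by (simp add: pderiv_pCons)

lemma bderiv_w_sep: "bderiv_w (sep f (g::'a::idom poly)) = sep (pderiv f) 0"
  unfolding bderiv_w_def
  by (rule poly_eqI) (simp add: coeff_pderiv coeff_sep of_nat_poly)

lemma bderiv_u_sep: "bderiv_u (sep (f::'a::idom poly) g) = sep 0 (pderiv g)"
  unfolding bderiv_u_def
  by (rule poly_eqI) (simp add: coeff_map_poly coeff_sep pderiv_diff pderiv_const')

lemma map_poly_of_real_diff: "map_poly (of_real :: real \<Rightarrow> complex) (p - q) = map_poly of_real p - map_poly of_real q"
  by (rule poly_eqI) (simp add: coeff_map_poly)

lemma complexify_sep: "complexify (sep f g) = sep (map_poly of_real f) (map_poly of_real g)"
  unfolding complexify_def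
  by (rule poly_eqI) (simp add: coeff_map_poly coeff_sep map_poly_of_real_diff map_poly_pCons)

lemma principal_part_sep:
  assumes "degree f = k" "degree g = 4 * k" "1 \<le> k"
  shows "principal_part k (sep f g) = monom [:lead_coeff f:] k - [:monom (lead_coeff g) (4 * k):]"
proof (rule poly_eqI)
  fix m
  show "coeff (principal_part k (sep f g)) m = coeff (monom [:lead_coeff f:] k - [:monom (lead_coeff g) (4 * k):]) m"
  proof (cases "m \<le> k")
    case True
    then have "coeff (principal_part k (sep f g)) m = monom (bcoeff (sep f g) (4*k - 4*m) m) (4*k - 4*m)"
      by (simp add: principal_part_def nth_default_def del: upt_Suc)
    then show ?thesis using True assms
      by (cases "m = 0"; cases "m = k") (auto simp: bcoeff_sep monom_0 coeff_pCons minus_monom split: nat.split)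
  next
    case False
    then show ?thesis using assms by (simp add: principal_part_def nth_default_def coeff_pCons split: nat.split del: upt_Suc)
  qed
qed

lemma squarefree_binom:
  fixes a b :: "'a::field_char_0"
  assumes a: "a \<noteq> 0" and b: "b \<noteq> 0" and k: "1 \<le> k"
  shows "squarefree (monom [:a:] k - [:monom b m:] :: 'a poly poly)"
proof (rule squarefreeI)
  let ?Q = "monom [:a:] k - [:monom b m:] :: 'a poly poly"
  fix x :: "'a poly poly" assume "x ^ 2 dvd ?Q"
  then obtain y where "?Q = x ^ 2 * y" by (rule dvdE)
  then have y: "?Q = x * (x * y)" by (simp add: power2_eq_square mult.assoc)
  have dQ: "x dvd ?Q" using y by simp
  have "pderiv ?Q = x * pderiv (x * y) + (x * y) * pderiv x" using y by (simp add: pderiv_mult)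
  then have dP: "x dvd pderiv ?Q" by simp
  have pQ: "pderiv ?Q = monom [:of_nat k * a:] (k - 1)"
    by (simp add: pderiv_diff pderiv_monom pderiv_const' of_nat_poly)
  have D: "smult [:of_nat k:] ?Q - pCons 0 (pderiv ?Q) = [: - smult (of_nat k) (monom b m) :]"
    unfolding pQ using k
    by (intro poly_eqI) (auto simp: coeff_pCons smult_monom split: nat.split)
  have "x dvd smult [:of_nat k:] ?Q - pCons 0 (pderiv ?Q)"
  proof -
    have "x dvd smult [:of_nat k:] ?Q" using dQ by (simp add: dvd_smult)
    moreover have "x dvd pCons 0 (pderiv ?Q)" using dP
    proof -
      have "pCons 0 (pderiv ?Q) = [:0, 1:] * pderiv ?Q" by simp
      then show ?thesis using dP by (metis dvd_mult)
    qed
    ultimately show ?thesis by (rule dvd_diff)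
  qed
  then have xd: "x dvd [: - smult (of_nat k) (monom b m) :]" using D by simp
  have nz: "[: - smult (of_nat k) (monom b m) :] \<noteq> 0" using b k by simp
  have "degree x = 0" using dvd_imp_degree_le[OF xd nz] by simp
  then have xc: "x = [:coeff x 0:]" by (rule degree_0_id[symmetric])
  have "[:coeff x 0:] dvd monom [:of_nat k * a:] (k - 1)" using dP pQ xc by metis
  then have "coeff x 0 dvd [:of_nat k * a:]"
    unfolding const_poly_dvd_iff by (metis coeff_monom)
  moreover have "is_unit [:of_nat k * a:]" using a k by (simp add: is_unit_poly_iff dvd_field_iff)
  ultimately have "is_unit (coeff x 0)" by (rule dvd_unit_imp_unit)
  then show "x dvd 1" using xc by (metis is_unit_poly_iff)
qed

lemma newton_polygon_sep:
  fixes f g :: "real poly"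
  assumes df: "degree f = k" and dg: "degree g = 4 * k" and k: "1 \<le> k" and c0: "coeff f 0 \<noteq> coeff g 0"
  shows "newton_polygon (sep f g) = convex hull {(0,0), (real (4*k), 0), (0, real k)}"
proof -
  let ?S = "{(real i, real j) | i j. bcoeff (sep f g) i j \<noteq> 0}"
  let ?T = "convex hull {(0::real,0::real), (real (4*k), 0), (0, real k)}"
  have kpos: "0 < real k" using k by simp
  have ST: "?S \<subseteq> ?T"
  proof
    fix p assume "p \<in> ?S"
    then obtain i j where p: "p = (real i, real j)" and nz: "bcoeff (sep f g) i j \<noteq> 0" by blast
    have "(i = 0 \<and> j \<le> k) \<or> (j = 0 \<and> i \<le> 4 * k)"
    proof -
      have "i = 0 \<or> j = 0" using nz by (auto simp: bcoeff_sep split: if_splits)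
      moreover have "i = 0 \<Longrightarrow> j \<noteq> 0 \<Longrightarrow> j \<le> k" using nz df by (auto simp: bcoeff_sep intro: le_degree)
      moreover have "j = 0 \<Longrightarrow> i \<noteq> 0 \<Longrightarrow> i \<le> 4 * k" using nz dg by (auto simp: bcoeff_sep) (metis le_degree)
      ultimately show ?thesis by auto
    qed
    then show "p \<in> ?T"
    proof
      assume h: "i = 0 \<and> j \<le> k"
      let ?w = "real j / real k"
      have "p = (1 - ?w) *\<^sub>R (0,0) + 0 *\<^sub>R (real (4*k), 0) + ?w *\<^sub>R (0, real k)"
        using h p kpos by simp
      moreover have "0 \<le> ?w" "?w \<le> 1" using h kpos by auto
      ultimately show ?thesis unfolding convex_hull_3 by (intro CollectI exI[of _ "1 - ?w"] exI[of _ 0] exI[of _ ?w]) auto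
    next
      assume h: "j = 0 \<and> i \<le> 4 * k"
      let ?v = "real i / real (4 * k)"
      have "p = (1 - ?v) *\<^sub>R (0,0) + ?v *\<^sub>R (real (4*k), 0) + 0 *\<^sub>R (0, real k)"
        using h p kpos by simp
      moreover have "0 \<le> ?v" "?v \<le> 1" using h kpos by auto
      ultimately show ?thesis unfolding convex_hull_3 by (intro CollectI exI[of _ "1 - ?v"] exI[of _ ?v] exI[of _ 0]) auto
    qed
  qed
  have VS: "{(0::real,0::real), (real (4*k), 0), (0, real k)} \<subseteq> ?S"
  proof -
    have "bcoeff (sep f g) 0 0 \<noteq> 0" using c0 by (simp add: bcoeff_sep)
    moreover have "bcoeff (sep f g) (4*k) 0 \<noteq> 0" using k dg
    proof -
      have "g \<noteq> 0" using k dg by auto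
      then have "coeff g (4*k) \<noteq> 0" using dg by (metis leading_coeff_0_iff)
      then show ?thesis using k by (simp add: bcoeff_sep)
    qed
    moreover have "bcoeff (sep f g) 0 k \<noteq> 0" using k df
    proof -
      have "f \<noteq> 0" using k df by auto
      then have "coeff f k \<noteq> 0" using df by (metis leading_coeff_0_iff)
      then show ?thesis using k by (simp add: bcoeff_sep)
    qed
    ultimately have "(real 0, real 0) \<in> ?S" "(real (4*k), real 0) \<in> ?S" "(real 0, real k) \<in> ?S" by blast+
    then show ?thesis by simp
  qed
  show ?thesis unfolding newton_polygon_def
  proof (rule antisym)
    show "convex hull ?S \<subseteq> ?T" by (rule hull_minimal[OF ST]) simp
    have "?T \<subseteq> convex hull ?S" by (rule hull_mono[OF VS])
    then show "?T \<subseteq> convex hull ?S" .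
  qed
qed

definition piece :: "nat \<Rightarrow> nat \<Rightarrow> (real \<Rightarrow> real) \<Rightarrow> real set \<Rightarrow> (real \<times> real) set" where
  "piece n m s S = (\<lambda>w. (cos ((real m * pi + arccos ((-1)^m * s w)) / real n), w)) ` S"
definition tailR :: "nat \<Rightarrow> (real \<Rightarrow> real) \<Rightarrow> real set \<Rightarrow> (real \<times> real) set" where
  "tailR n s S = (\<lambda>w. (cosh (arcosh (s w) / real n), w)) ` S"
definition tailL :: "nat \<Rightarrow> (real \<Rightarrow> real) \<Rightarrow> real set \<Rightarrow> (real \<times> real) set" where
  "tailL n s S = (\<lambda>w. (- cosh (arcosh (s w) / real n), w)) ` S"
definition chain :: "nat \<Rightarrow> (real \<Rightarrow> real) \<Rightarrow> real set \<Rightarrow> (real \<times> real) set" where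
  "chain n s S = (\<Union>m<n. piece n m s S)"

lemma connected_chain_gen:
  assumes "\<And>m. m < N \<Longrightarrow> connected (A m)" "\<And>m. Suc m < N \<Longrightarrow> A m \<inter> A (Suc m) \<noteq> {}"
  shows "connected (\<Union>m<N. A m)"
  using assms
proof (induction N)
  case 0 then show ?case by simp
next
  case (Suc N)
  show ?case
  proof (cases N)
    case 0 then show ?thesis using Suc by (simp add: lessThan_Suc)
  next
    case (Suc N')
    have eq: "(\<Union>m<Suc N. A m) = (\<Union>m<N. A m) \<union> A N" by (auto simp: lessThan_Suc)
    have c1: "connected (\<Union>m<N. A m)" using Suc.IH Suc.prems by auto
    have "A N' \<inter> A N \<noteq> {}" using Suc.prems(2)[of N'] Suc by simp
    moreover have "A N' \<subseteq> (\<Union>m<N. A m)" using Suc by auto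
    ultimately have "(\<Union>m<N. A m) \<inter> A N \<noteq> {}" by blast
    then show ?thesis unfolding eq by (intro connected_Un c1 Suc.prems) auto
  qed
qed

lemma sign_sq: "(-1::real)^m * (-1)^m = 1"
  by (induct m) auto

lemma piece_sub:
  assumes "1 \<le> n" "(u, w) \<in> piece n m s S" "\<forall>w\<in>S. \<bar>s w\<bar> \<le> 1"
  shows "poly (cheb n) u = s w \<and> w \<in> S"
proof -
  obtain w' where w': "w' \<in> S" "(u, w) = (cos ((real m * pi + arccos ((-1)^m * s w')) / real n), w')"
    using assms(2) unfolding piece_def by auto
  have b: "-1 \<le> (-1)^m * s w' \<and> (-1)^m * s w' \<le> 1" using assms(3) w'(1)
    by (cases "even m") (auto simp: abs_le_iff)
  have "poly (cheb n) u = cos (real m * pi + arccos ((-1)^m * s w'))"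
    using w' assms(1) by (simp add: cheb_cos)
  also have "\<dots> = (-1)^m * ((-1)^m * s w')" using b by (simp add: cos_add)
  also have "\<dots> = s w'" by (simp add: mult.assoc[symmetric] sign_sq)
  finally show ?thesis using w' by auto
qed

lemma cheb_even_abs: "even n \<Longrightarrow> poly (cheb n) (- x) = poly (cheb n) x"
  by (simp add: cheb_minus)

lemma tailR_sub:
  assumes "1 \<le> n" "(u, w) \<in> tailR n s S" "\<forall>w\<in>S. 1 \<le> s w"
  shows "poly (cheb n) u = s w \<and> w \<in> S"
proof -
  obtain w' where w': "w' \<in> S" "(u, w) = (cosh (arcosh (s w') / real n), w')"
    using assms(2) unfolding tailR_def by auto
  have "poly (cheb n) u = cosh (real n * (arcosh (s w') / real n))" using w' by (simp add: cheb_cosh)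
  also have "\<dots> = s w'" using assms w' by simp
  finally show ?thesis using w' by auto
qed

lemma tailL_sub:
  assumes "1 \<le> n" "even n" "(u, w) \<in> tailL n s S" "\<forall>w\<in>S. 1 \<le> s w"
  shows "poly (cheb n) u = s w \<and> w \<in> S"
proof -
  obtain w' where w': "w' \<in> S" "(u, w) = (- cosh (arcosh (s w') / real n), w')"
    using assms(3) unfolding tailL_def by auto
  have "poly (cheb n) u = poly (cheb n) (cosh (arcosh (s w') / real n))"
    using w' assms(2) by (simp add: cheb_even_abs)
  also have "\<dots> = cosh (real n * (arcosh (s w') / real n))" by (simp add: cheb_cosh)
  also have "\<dots> = s w'" using assms w' by simp
  finally show ?thesis using w' by auto
qed

lemma cheb_ge_abs: "even n \<Longrightarrow> 1 \<le> n \<Longrightarrow> 1 \<le> \<bar>x\<bar> \<Longrightarrow> 1 \<le> poly (cheb n) x"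
proof -
  assume n: "even n" "1 \<le> n" and x: "1 \<le> \<bar>x\<bar>"
  have "poly (cheb n) x = poly (cheb n) \<bar>x\<bar>" using n by (cases "x \<ge> 0") (auto simp: cheb_even_abs)
  also have "\<bar>x\<bar> \<le> \<dots>" using cheb_ge[of "\<bar>x\<bar>" n] x n by simp
  finally show ?thesis using x by simp
qed

lemma cover1:
  assumes n: "even n" "2 \<le> n"
  shows "{(u, w). poly (cheb n) u = s w} \<subseteq>
    chain n s {w. \<bar>s w\<bar> \<le> 1} \<union> tailR n s {w. 1 \<le> s w} \<union> tailL n s {w. 1 \<le> s w}"
proof -
  have n1: "1 \<le> n" using n by simp
  have np: "0 < real n" using n by simp
  show ?thesis
  proof (rule subrelI)
    fix u w assume "(u, w) \<in> {(u, w). poly (cheb n) u = s w}"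
    then have uw: "poly (cheb n) u = s w" by simp
    consider "1 \<le> u" | "u \<le> -1" | "-1 < u \<and> u < 1" by linarith
    then show "(u, w) \<in> chain n s {w. \<bar>s w\<bar> \<le> 1} \<union> tailR n s {w. 1 \<le> s w} \<union> tailL n s {w. 1 \<le> s w}"
    proof cases
      case 1
      have sw: "s w = cosh (real n * arcosh u)" using uw cheb_cosh[of n "arcosh u"] 1 by simp
      have "arcosh (s w) = real n * arcosh u" unfolding sw using 1 by (simp add: arcosh_cosh_real)
      then have "cosh (arcosh (s w) / real n) = u" using np 1 by simp
      moreover have "1 \<le> s w" using uw cheb_ge_abs[OF n(1) n1, of u] 1 by simp
      ultimately have "(u, w) \<in> tailR n s {w. 1 \<le> s w}" unfolding tailR_def
        by (intro image_eqI[of _ _ w]) auto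
      then show ?thesis by blast
    next
      case 2
      have uw': "poly (cheb n) (- u) = s w" using uw n by (simp add: cheb_even_abs)
      have sw: "s w = cosh (real n * arcosh (- u))" using uw' cheb_cosh[of n "arcosh (-u)"] 2 by simp
      have "arcosh (s w) = real n * arcosh (- u)" unfolding sw using 2 by (simp add: arcosh_cosh_real)
      then have "- cosh (arcosh (s w) / real n) = u" using np 2 by simp
      moreover have "1 \<le> s w" using uw cheb_ge_abs[OF n(1) n1, of u] 2 by simp
      ultimately have "(u, w) \<in> tailL n s {w. 1 \<le> s w}" unfolding tailL_def
        by (intro image_eqI[of _ _ w]) auto
      then show ?thesis by blast
    next
      case 3
      define \<theta> where "\<theta> = arccos u"
      have th: "0 \<le> \<theta>" "\<theta> \<le> pi" "cos \<theta> = u" using 3 unfolding \<theta>_def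
        by (auto intro: arccos_lbound arccos_ubound)
      define r where "r = real n * \<theta> / pi"
      have r: "0 \<le> r" "r \<le> real n" using th np unfolding r_def by (auto simp: field_simps)
      define m where "m = (if r \<ge> real n then n - 1 else nat \<lfloor>r\<rfloor>)"
      have mr: "real m \<le> r \<and> r \<le> real m + 1 \<and> m < n"
      proof (cases "r \<ge> real n")
        case True
        then show ?thesis using r n unfolding m_def by (auto simp: of_nat_diff)
      next
        case False
        have "nat \<lfloor>r\<rfloor> < n" using False r by linarith
        then show ?thesis using False r unfolding m_def by (auto simp: of_nat_nat)
      qed
      define \<phi> where "\<phi> = real n * \<theta> - real m * pi"
      have ph: "0 \<le> \<phi>" "\<phi> \<le> pi"
      proof -
        have "real m * pi \<le> real n * \<theta>" using mr unfolding r_def by (simp add: field_simps)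
        then show "0 \<le> \<phi>" unfolding \<phi>_def by simp
        have "real n * \<theta> \<le> (real m + 1) * pi" using mr unfolding r_def by (simp add: field_simps)
        then show "\<phi> \<le> pi" unfolding \<phi>_def by (simp add: algebra_simps)
      qed
      have sw: "s w = cos (real m * pi + \<phi>)"
        using uw cheb_cos[of n \<theta>] th unfolding \<phi>_def by simp
      then have "(-1)^m * s w = cos \<phi>"
        by (simp add: cos_add mult.assoc[symmetric] sign_sq)
      then have "arccos ((-1)^m * s w) = \<phi>" using ph by (simp add: arccos_cos)
      then have "cos ((real m * pi + arccos ((-1)^m * s w)) / real n) = u"
        using th np unfolding \<phi>_def by simp
      moreover have "\<bar>s w\<bar> \<le> 1" using sw by simp
      ultimately have "(u, w) \<in> piece n m s {w. \<bar>s w\<bar> \<le> 1}" unfolding piece_def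
        by (intro image_eqI[of _ _ w]) auto
      then show ?thesis using mr unfolding chain_def by blast
    qed
  qed
qed

lemma cover2:
  assumes n: "even n" "2 \<le> n"
  shows "chain n s {w. \<bar>s w\<bar> \<le> 1} \<union> tailR n s {w. 1 \<le> s w} \<union> tailL n s {w. 1 \<le> s w} \<subseteq> {(u, w). poly (cheb n) u = s w}"
proof -
  have n1: "1 \<le> n" using n by simp
  show ?thesis
  proof (rule subrelI)
    fix u w assume "(u, w) \<in> chain n s {w. \<bar>s w\<bar> \<le> 1} \<union> tailR n s {w. 1 \<le> s w} \<union> tailL n s {w. 1 \<le> s w}"
    then consider m where "(u, w) \<in> piece n m s {w. \<bar>s w\<bar> \<le> 1}" | "(u, w) \<in> tailR n s {w. 1 \<le> s w}"
      | "(u, w) \<in> tailL n s {w. 1 \<le> s w}" unfolding chain_def by blast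
    then have "poly (cheb n) u = s w"
    proof cases
      case 1 then show ?thesis using piece_sub[OF n1 1] by auto
    next
      case 2 then show ?thesis using tailR_sub[OF n1 2] by auto
    next
      case 3 then show ?thesis using tailL_sub[OF n1 n(1) 3] by auto
    qed
    then show "(u, w) \<in> {(u, w). poly (cheb n) u = s w}" by simp
  qed
qed

lemma cover:
  assumes n: "even n" "2 \<le> n"
  shows "{(u, w). poly (cheb n) u = s w} =
    chain n s {w. \<bar>s w\<bar> \<le> 1} \<union> tailR n s {w. 1 \<le> s w} \<union> tailL n s {w. 1 \<le> s w}"
  using cover1[OF n] cover2[OF n] by (rule antisym)

lemma piece_connected:
  assumes "1 \<le> n" "continuous_on S s" "connected S" "\<forall>w\<in>S. \<bar>s w\<bar> \<le> 1"
  shows "connected (piece n m s S)"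
  unfolding piece_def
proof (rule connected_continuous_image[OF _ assms(3)])
  have b: "\<forall>w\<in>S. -1 \<le> (-1)^m * s w \<and> (-1)^m * s w \<le> 1" using assms(4)
    by (cases "even m") (auto simp: abs_le_iff)
  show "continuous_on S (\<lambda>w. (cos ((real m * pi + arccos ((- 1) ^ m * s w)) / real n), w))"
    using assms(1) by (intro continuous_intros assms(2) b) auto
qed

lemma piece_mem:
  assumes "w \<in> S" "x = cos ((real m * pi + arccos ((-1)^m * s w)) / real n)"
  shows "(x, w) \<in> piece n m s S"
  unfolding piece_def using assms by auto

lemma chain_connected:
  assumes "1 \<le> n" "continuous_on S s" "connected S" "\<forall>w\<in>S. \<bar>s w\<bar> \<le> 1"
    and a: "a \<in> S" "s a = 1" and b: "b \<in> S" "s b = -1"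
  shows "connected (chain n s S)"
  unfolding chain_def
proof (rule connected_chain_gen)
  fix m assume "m < n" then show "connected (piece n m s S)" by (intro piece_connected) (use assms in auto)
next
  fix m assume "Suc m < n"
  obtain w where w: "w \<in> S" "s w = (-1)^(Suc m)"
    using a b by (cases "even m") auto
  have e1: "(-1::real)^m * (-1)^(Suc m) = -1" using sign_sq[of m] by simp
  have e2: "(-1::real)^(Suc m) * (-1)^(Suc m) = 1" using sign_sq[of "Suc m"] by simp
  have "(cos (real (Suc m) * pi / real n), w) \<in> piece n m s S"
    by (rule piece_mem[OF w(1)]) (simp add: w(2) e1 algebra_simps)
  moreover have "(cos (real (Suc m) * pi / real n), w) \<in> piece n (Suc m) s S"
    by (rule piece_mem[OF w(1)]) (simp add: w(2) e2)
  ultimately show "piece n m s S \<inter> piece n (Suc m) s S \<noteq> {}" by blast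
qed

lemma chain_end1:
  assumes "1 \<le> n" "w \<in> S" "s w = 1"
  shows "(1, w) \<in> chain n s S"
proof -
  have "(1, w) \<in> piece n 0 s S" by (rule piece_mem[OF assms(2)]) (simp add: assms(3))
  then show ?thesis unfolding chain_def using assms(1) by auto
qed

lemma chain_end2:
  assumes "1 \<le> n" "even n" "w \<in> S" "s w = 1"
  shows "(-1, w) \<in> chain n s S"
proof -
  have o: "odd (n - 1)" using assms by simp
  have e: "(-1::real)^(n-1) = -1" using o by simp
  have np: "real n \<noteq> 0" using assms by simp
  have "arccos ((-1)^(n-1) * s w) = pi" using e assms(4) by simp
  moreover have "real (n - 1) * pi + pi = real n * pi" using assms by (simp add: of_nat_diff algebra_simps)
  ultimately have "(real (n - 1) * pi + arccos ((-1)^(n-1) * s w)) / real n = pi" using np by simp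
  then have "cos ((real (n - 1) * pi + arccos ((-1)^(n-1) * s w)) / real n) = -1" by simp
  then have "(-1, w) \<in> piece n (n - 1) s S" by (intro piece_mem[OF assms(3)]) simp
  then show ?thesis unfolding chain_def using assms(1) by auto
qed

lemma tails_connected:
  assumes "1 \<le> n" "continuous_on S s" "connected S" "\<forall>w\<in>S. 1 \<le> s w"
  shows "connected (tailR n s S)" "connected (tailL n s S)"
  unfolding tailR_def tailL_def
  by (rule connected_continuous_image[OF _ assms(3)], intro continuous_intros assms(2), use assms(1,4) in auto)+

lemma tail_ends:
  assumes "w \<in> S" "s w = 1"
  shows "(1, w) \<in> tailR n s S" "(-1, w) \<in> tailL n s S"
  unfolding tailR_def tailL_def using assms by (auto intro!: image_eqI[of _ _ w])

lemma level_upper_conn: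
  fixes p :: "real poly"
  assumes P: "is_interval {w. P w}"
    and crit: "\<And>z w1 w3. P w1 \<Longrightarrow> P w3 \<Longrightarrow> w1 < z \<Longrightarrow> z < w3 \<Longrightarrow> poly (pderiv p) z = 0 \<Longrightarrow> poly p z \<le> \<beta>"
  shows "is_interval {w. P w \<and> poly p w \<le> \<beta>}"
  unfolding is_interval_1
proof (intro ballI allI impI)
  fix a b x assume a: "a \<in> {w. P w \<and> poly p w \<le> \<beta>}" and b: "b \<in> {w. P w \<and> poly p w \<le> \<beta>}"
    and x: "a \<le> x \<and> x \<le> b"
  have Px: "P x" using P a b x unfolding is_interval_1 by blast
  show "x \<in> {w. P w \<and> poly p w \<le> \<beta>}"
  proof (rule ccontr)
    assume "x \<notin> {w. P w \<and> poly p w \<le> \<beta>}"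
    then have px: "poly p x > \<beta>" using Px by auto
    have ne: "{a..b} \<noteq> {}" using x by auto
    obtain z where z: "z \<in> {a..b}" "\<forall>y\<in>{a..b}. poly p y \<le> poly p z"
    proof -
      have "continuous_on {a..b} (poly p)" by (intro continuous_intros)
      then show ?thesis using continuous_attains_sup[OF compact_Icc ne, of "poly p"] that by blast
    qed
    have pz: "poly p z > \<beta>" using z(2) x px by force
    have "a < z \<and> z < b \<and> poly (pderiv p) z = 0"
      by (rule interior_max_crit) (use z pz a b in auto)
    then have "poly p z \<le> \<beta>" using crit[of a b z] a b by auto
    then show False using pz by simp
  qed
qed

lemma level_lower_conn:
  fixes p :: "real poly"
  assumes P: "is_interval {w. P w}"
    and crit: "\<And>z w1 w3. P w1 \<Longrightarrow> P w3 \<Longrightarrow> w1 < z \<Longrightarrow> z < w3 \<Longrightarrow> poly (pderiv p) z = 0 \<Longrightarrow> \<alpha> \<le> poly p z"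
  shows "is_interval {w. P w \<and> \<alpha> \<le> poly p w}"
proof -
  have "is_interval {w. P w \<and> poly (- p) w \<le> - \<alpha>}"
    by (rule level_upper_conn[OF P]) (use crit in \<open>auto simp: pderiv_minus\<close>)
  then show ?thesis by simp
qed

lemma is_interval_Int1: "is_interval (A :: real set) \<Longrightarrow> is_interval B \<Longrightarrow> is_interval (A \<inter> B)"
  unfolding is_interval_1 by blast

lemma level_conn:
  fixes p :: "real poly"
  assumes P: "is_interval {w. P w}"
    and crit: "\<And>z w1 w3. P w1 \<Longrightarrow> P w3 \<Longrightarrow> w1 < z \<Longrightarrow> z < w3 \<Longrightarrow> poly (pderiv p) z = 0 \<Longrightarrow> \<alpha> \<le> poly p z \<and> poly p z \<le> \<beta>"
  shows "connected {w. P w \<and> \<alpha> \<le> poly p w \<and> poly p w \<le> \<beta>}"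
proof -
  have "is_interval ({w. P w \<and> poly p w \<le> \<beta>} \<inter> {w. P w \<and> \<alpha> \<le> poly p w})"
    by (intro is_interval_Int1 level_upper_conn level_lower_conn P) (use crit in blast)+
  moreover have "{w. P w \<and> poly p w \<le> \<beta>} \<inter> {w. P w \<and> \<alpha> \<le> poly p w} = {w. P w \<and> \<alpha> \<le> poly p w \<and> poly p w \<le> \<beta>}"
    by auto
  ultimately show ?thesis by (simp add: is_interval_connected_1)
qed

definition FF :: "nat \<Rightarrow> real poly" where "FF k = QQ k (1/4)"
definition zc :: "nat \<Rightarrow> nat \<Rightarrow> real" where "zc k j = critpt k (1/4) j"
definition vF :: "nat \<Rightarrow> nat \<Rightarrow> real" where "vF k j = poly (FF k) (zc k j)"

lemma poly_FF: "poly (FF k) w = poly (cheb k) w + w / 4"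
  by (simp add: FF_def poly_QQ)

lemma zc_props:
  assumes "1 \<le> k" "1 \<le> j" "j + 1 \<le> k"
  shows "critP k (1/4) j (zc k j)"
  unfolding zc_def by (rule critpt) (use assms in auto)

lemma lohi_bounds: "-1 \<le> lo n j" "lo n j \<le> 1" "-1 \<le> hi n j" "hi n j \<le> 1" "-1 \<le> xx n j" "xx n j \<le> 1"
  unfolding lo_def hi_def xx_def by auto

lemma zc_range:
  assumes "1 \<le> k" "1 \<le> j" "j + 1 \<le> k"
  shows "lo k j < zc k j" "zc k j < hi k j" "-1 \<le> zc k j" "zc k j \<le> 1"
  using zc_props[OF assms] lohi_bounds[of k j] unfolding critP_def by auto

lemma vF_bounds:
  assumes "1 \<le> k" "1 \<le> j" "j + 1 \<le> k"
  shows "-1 + zc k j / 4 \<le> vF k j" "vF k j \<le> 1 + zc k j / 4" "\<bar>vF k j\<bar> \<le> 5/4"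
proof -
  have c: "critP k (1/4) j (zc k j)" by (rule zc_props[OF assms])
  have r: "-1 \<le> zc k j" "zc k j \<le> 1" using zc_range[OF assms] by auto
  have x: "-1 \<le> xx k j" "xx k j \<le> 1" using lohi_bounds by auto
  show a: "-1 + zc k j / 4 \<le> vF k j" using c r x unfolding critP_def vF_def FF_def by (cases "even j") auto
  show b: "vF k j \<le> 1 + zc k j / 4" using c r x unfolding critP_def vF_def FF_def by (cases "even j") auto
  show "\<bar>vF k j\<bar> \<le> 5/4" using a b r by auto
qed

lemma vF_window:
  assumes "1 \<le> k" "1 \<le> j" "j + 1 \<le> k"
  shows "even j \<Longrightarrow> 3/4 \<le> vF k j \<and> lo k j < (vF k j - 1) * 4 \<and> (vF k j - 1) * 4 < hi k j"
    and "odd j \<Longrightarrow> vF k j \<le> -3/4 \<and> lo k j < (vF k j + 1) * 4 \<and> (vF k j + 1) * 4 < hi k j"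
proof -
  have c: "critP k (1/4) j (zc k j)" by (rule zc_props[OF assms])
  have r: "lo k j < zc k j" "zc k j < hi k j" using zc_range[OF assms] by auto
  have o: "lo k j < xx k j" "xx k j < hi k j" using lo_hi_order[OF assms(2,3)] by auto
  have x: "-1 \<le> xx k j" "xx k j \<le> 1" using lohi_bounds by auto
  show "even j \<Longrightarrow> 3/4 \<le> vF k j \<and> lo k j < (vF k j - 1) * 4 \<and> (vF k j - 1) * 4 < hi k j"
  proof -
    assume e: "even j"
    have "1 + 1/4 * xx k j \<le> vF k j" "vF k j \<le> 1 + 1/4 * zc k j"
      using c e unfolding critP_def vF_def FF_def by auto
    then show ?thesis using r o x by (auto simp: field_simps)
  qed
  show "odd j \<Longrightarrow> vF k j \<le> -3/4 \<and> lo k j < (vF k j + 1) * 4 \<and> (vF k j + 1) * 4 < hi k j"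
  proof -
    assume e: "odd j"
    have "-1 + 1/4 * zc k j \<le> vF k j" "vF k j \<le> -1 + 1/4 * xx k j"
      using c e unfolding critP_def vF_def FF_def by auto
    then show ?thesis using r o x by (auto simp: field_simps)
  qed
qed

lemma vF_inj:
  assumes "1 \<le> k" "j \<in> {1..k-1}" "j' \<in> {1..k-1}" "vF k j = vF k j'"
  shows "j = j'"
proof (rule ccontr)
  assume ne: "j \<noteq> j'"
  have j: "1 \<le> j" "j + 1 \<le> k" and j': "1 \<le> j'" "j' + 1 \<le> k" using assms by auto
  have disj: "\<And>a b y. 1 \<le> a \<Longrightarrow> a < b \<Longrightarrow> b + 1 \<le> k \<Longrightarrow> lo k a < y \<Longrightarrow> y < hi k a \<Longrightarrow> lo k b < y \<Longrightarrow> y < hi k b \<Longrightarrow> False"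
  proof -
    fix a b y assume h: "1 \<le> a" "a < b" "b + 1 \<le> k" "lo k a < y" "y < hi k a" "lo k b < y" "y < hi k b"
    have "hi k b \<le> lo k a" using h(2,3) by (rule hi_le_lo)
    then show False using h by linarith
  qed
  show False
  proof (cases "even j = even j'")
    case True
    then show False
    proof (cases "even j")
      case True
      then have "even j'" using \<open>even j = even j'\<close> by simp
      then show False using vF_window(1)[OF assms(1) j] vF_window(1)[OF assms(1) j'] True assms(4) ne disj[of j j'] disj[of j' j] j j'
        by (cases j j' rule: linorder_cases) auto
    next
      case False
      then have "odd j'" using \<open>even j = even j'\<close> by simp
      then show False using vF_window(2)[OF assms(1) j] vF_window(2)[OF assms(1) j'] False assms(4) ne disj[of j j'] disj[of j' j] j j'
        by (cases j j' rule: linorder_cases) auto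
    qed
  next
    case False
    then show False using vF_window[OF assms(1) j] vF_window[OF assms(1) j'] assms(4)
      by (cases "even j") auto
  qed
qed

lemma real_crit:
  assumes "1 \<le> k" "poly (pderiv (FF k)) z = 0"
  shows "\<exists>j\<in>{1..k-1}. z = zc k j"
proof -
  have "complex_of_real z \<in> {w::complex. poly (map_poly of_real (pderiv (QQ k (1/4)))) w = 0}"
    using assms(2) by (simp add: poly_of_real_map FF_def)
  then have "complex_of_real z \<in> (\<lambda>j. of_real (critpt k (1/4) j)) ` {1..k-1}"
    using crit_all[OF assms(1), of "1/4"] by simp
  then show ?thesis unfolding zc_def by auto
qed

lemma FF_mono:
  assumes "1 \<le> k" "1 \<le> x" "x < y" shows "poly (FF k) x < poly (FF k) y"
  using cheb_mono[OF assms(2,3,1)] assms by (simp add: poly_FF)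

lemma FF_mid: "-1 \<le> w \<Longrightarrow> w \<le> 1 \<Longrightarrow> -1 + w/4 \<le> poly (FF k) w \<and> poly (FF k) w \<le> 1 + w/4"
  using cheb_bound[of w k] by (simp add: poly_FF abs_le_iff)

lemma FF_right: "1 \<le> k \<Longrightarrow> 1 \<le> w \<Longrightarrow> w + w/4 \<le> poly (FF k) w"
  using cheb_ge[of w k] by (simp add: poly_FF)

lemma FF_left_odd: "1 \<le> k \<Longrightarrow> odd k \<Longrightarrow> w \<le> -1 \<Longrightarrow> poly (FF k) w \<le> w + w/4"
  using cheb_ge[of "-w" k] cheb_minus[of k "-w"] by (simp add: poly_FF)

lemma FF_left_even: "1 \<le> k \<Longrightarrow> even k \<Longrightarrow> w \<le> -1 \<Longrightarrow> - w + w/4 \<le> poly (FF k) w"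
  using cheb_ge[of "-w" k] cheb_minus[of k "-w"] by (simp add: poly_FF)

lemma degree_FF: "1 \<le> k \<Longrightarrow> degree (FF k) = k"
  unfolding FF_def by (rule degree_QQ) auto

lemma conn_odd_gen:
  fixes s :: "real \<Rightarrow> real"
  assumes n: "even n" "2 \<le> n" and cs: "continuous_on UNIV s"
    and W: "connected {w. \<bar>s w\<bar> \<le> 1}" and Wt: "connected {w. 1 \<le> s w}"
    and a: "s a = 1" and b: "s b = -1"
  shows "connected {(u, w). poly (cheb n) u = s w}"
proof -
  have n1: "1 \<le> n" using n by simp
  let ?W = "{w. \<bar>s w\<bar> \<le> 1}" and ?Wt = "{w. 1 \<le> s w}"
  have c1: "connected (chain n s ?W)"
    by (rule chain_connected[OF n1 continuous_on_subset[OF cs] W, of a b]) (use a b in auto)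
  have c2: "connected (tailR n s ?Wt)" "connected (tailL n s ?Wt)"
    by (rule tails_connected[OF n1 continuous_on_subset[OF cs] Wt]; auto)+
  have e1: "(1, a) \<in> chain n s ?W" by (rule chain_end1[OF n1]) (use a in auto)
  have e2: "(-1, a) \<in> chain n s ?W" by (rule chain_end2[OF n1 n(1)]) (use a in auto)
  have e3: "(1, a) \<in> tailR n s ?Wt" "(-1, a) \<in> tailL n s ?Wt" using tail_ends[of a ?Wt s n] a by auto
  have "connected (chain n s ?W \<union> tailR n s ?Wt)"
    by (rule connected_Un[OF c1 c2(1)]) (use e1 e3 in blast)
  then have "connected (chain n s ?W \<union> tailR n s ?Wt \<union> tailL n s ?Wt)"
    by (rule connected_Un[OF _ c2(2)]) (use e2 e3 in blast)
  then show ?thesis using cover[OF n] by simp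
qed

lemma chain_Un: "chain n s (A \<union> B) = chain n s A \<union> chain n s B"
  unfolding chain_def piece_def by blast

lemma conn_even_gen:
  fixes s :: "real \<Rightarrow> real"
  assumes n: "even n" "2 \<le> n" and cs: "continuous_on UNIV s"
    and LR: "{w. \<bar>s w\<bar> \<le> 1} = L \<union> R"
    and L: "connected L" and R: "connected R" and Wt: "connected {w. 1 \<le> s w}"
    and p: "p \<in> L" "s p = 1" and p': "p' \<in> L" "s p' = -1"
    and q: "q \<in> R" "s q = 1" and q': "q' \<in> R" "s q' = -1"
  shows "connected {(u, w). poly (cheb n) u = s w}"
proof -
  have n1: "1 \<le> n" using n by simp
  let ?Wt = "{w. 1 \<le> s w}"
  have bL: "\<forall>w\<in>L. \<bar>s w\<bar> \<le> 1" and bR: "\<forall>w\<in>R. \<bar>s w\<bar> \<le> 1" using LR by auto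
  have cL: "connected (chain n s L)"
    by (rule chain_connected[OF n1 continuous_on_subset[OF cs] L bL p p']) auto
  have cR: "connected (chain n s R)"
    by (rule chain_connected[OF n1 continuous_on_subset[OF cs] R bR q q']) auto
  have c2: "connected (tailR n s ?Wt)" "connected (tailL n s ?Wt)"
    by (rule tails_connected[OF n1 continuous_on_subset[OF cs] Wt]; auto)+
  have e1: "(1, p) \<in> chain n s L" "(-1, p) \<in> chain n s L" using chain_end1[OF n1 p(1), of s] chain_end2[OF n1 n(1) p(1), of s] p(2) by auto
  have e2: "(1, q) \<in> chain n s R" using chain_end1[OF n1 q(1), of s] q(2) by auto
  have e3: "(1, p) \<in> tailR n s ?Wt" "(-1, p) \<in> tailL n s ?Wt" "(1, q) \<in> tailR n s ?Wt"
    using tail_ends[of p ?Wt s n] tail_ends[of q ?Wt s n] p q by auto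
  have "connected (chain n s L \<union> tailR n s ?Wt)"
    by (rule connected_Un[OF cL c2(1)]) (use e1 e3 in blast)
  then have "connected (chain n s L \<union> tailR n s ?Wt \<union> chain n s R)"
    by (rule connected_Un[OF _ cR]) (use e2 e3 in blast)
  then have "connected (chain n s L \<union> tailR n s ?Wt \<union> chain n s R \<union> tailL n s ?Wt)"
    by (rule connected_Un[OF _ c2(2)]) (use e1 e3 in blast)
  moreover have "chain n s L \<union> tailR n s ?Wt \<union> chain n s R \<union> tailL n s ?Wt =
      chain n s {w. \<bar>s w\<bar> \<le> 1} \<union> tailR n s ?Wt \<union> tailL n s ?Wt"
    unfolding LR chain_Un by blast
  ultimately show ?thesis using cover[OF n] by simp
qed

definition ee :: "nat \<Rightarrow> real" where "ee k = hi k (k - 1)"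
definition bet :: "nat \<Rightarrow> real" where "bet k = -1 + ee k / 4"
definition ss :: "nat \<Rightarrow> real \<Rightarrow> real" where
  "ss k w = (if odd k then poly (FF k) w / 2 else (bet k + 2 - poly (FF k) w) / 2)"

lemma cont_FF: "continuous_on A (poly (FF k))" by (intro continuous_intros)

lemma conn_odd:
  assumes k: "1 \<le> k" "odd k"
  shows "connected {(u, w). poly (cheb (4*k)) u = ss k w}"
proof -
  have s: "ss k = (\<lambda>w. poly (FF k) w / 2)" using k by (auto simp: ss_def)
  have crit: "\<And>z. poly (pderiv (FF k)) z = 0 \<Longrightarrow> -2 \<le> poly (FF k) z \<and> poly (FF k) z \<le> 2"
  proof -
    fix z assume "poly (pderiv (FF k)) z = 0"
    then obtain j where j: "j \<in> {1..k-1}" "z = zc k j" using real_crit[OF k(1)] by blast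
    have "\<bar>vF k j\<bar> \<le> 5/4" by (rule vF_bounds(3)) (use j k in auto)
    then show "-2 \<le> poly (FF k) z \<and> poly (FF k) z \<le> 2" using j by (auto simp: vF_def)
  qed
  have W: "connected {w. True \<and> -2 \<le> poly (FF k) w \<and> poly (FF k) w \<le> 2}"
    by (rule level_conn) (use crit in auto)
  have Weq: "{w. \<bar>ss k w\<bar> \<le> 1} = {w. True \<and> -2 \<le> poly (FF k) w \<and> poly (FF k) w \<le> 2}"
    unfolding s by auto
  have big: "\<And>a. 2 \<le> poly (FF k) a \<Longrightarrow> 1 < a"
  proof (rule ccontr)
    fix a assume a: "2 \<le> poly (FF k) a" "\<not> 1 < a"
    show False
    proof (cases "a < -1")
      case True then show False using FF_left_odd[OF k, of a] a by simp
    next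
      case False then show False using FF_mid[of a k] a by simp
    qed
  qed
  have Wt: "connected {w. 1 \<le> ss k w}"
  proof -
    have "is_interval {w. 2 \<le> poly (FF k) w}"
      unfolding is_interval_1
    proof (intro ballI allI impI)
      fix a b x assume a: "a \<in> {w. 2 \<le> poly (FF k) w}" and b: "b \<in> {w. 2 \<le> poly (FF k) w}" and x: "a \<le> x \<and> x \<le> b"
      have "1 < a" using big a by simp
      then have "poly (FF k) a \<le> poly (FF k) x" using FF_mono[OF k(1), of a x] x by (cases "a = x") auto
      then show "x \<in> {w. 2 \<le> poly (FF k) w}" using a by simp
    qed
    moreover have "{w. 1 \<le> ss k w} = {w. 2 \<le> poly (FF k) w}" unfolding s by auto
    ultimately show ?thesis by (simp add: is_interval_connected_1)
  qed
  obtain a where a: "1 \<le> a" "a \<le> 3" "poly (FF k) a = 2"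
  proof -
    have "poly (FF k) 1 \<le> 2" using FF_mid[of 1 k] by simp
    moreover have "2 \<le> poly (FF k) 3" using FF_right[OF k(1), of 3] by simp
    ultimately show ?thesis using IVT'[of "poly (FF k)" 1 2 3] cont_FF that by auto
  qed
  obtain b where b: "-3 \<le> b" "b \<le> -1" "poly (FF k) b = -2"
  proof -
    have "-2 \<le> poly (FF k) (-1)" using FF_mid[of "-1" k] by simp
    moreover have "poly (FF k) (-3) \<le> -2" using FF_left_odd[OF k, of "-3"] by simp
    ultimately show ?thesis using IVT'[of "poly (FF k)" "-3" "-2" "-1"] cont_FF that by auto
  qed
  show ?thesis
  proof (rule conn_odd_gen)
    show "even (4 * k)" "2 \<le> 4 * k" using k by auto
    show "continuous_on UNIV (ss k)" unfolding s by (intro continuous_intros) auto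
    show "connected {w. \<bar>ss k w\<bar> \<le> 1}" using W Weq by simp
    show "connected {w. 1 \<le> ss k w}" by (rule Wt)
    show "ss k a = 1" using a s by simp
    show "ss k b = -1" using b s by simp
  qed
qed

lemma even_facts:
  assumes k: "1 \<le> k" "even k"
  shows "zc k (k-1) < ee k" "vF k (k-1) < bet k"
    "\<And>j. j \<in> {1..k-2} \<Longrightarrow> ee k < zc k j \<and> bet k < vF k j"
    "-5/4 \<le> bet k" "bet k \<le> -3/4"
    "\<And>w. poly (FF k) w \<le> bet k \<Longrightarrow> w < ee k"
    "\<And>z. poly (pderiv (FF k)) z = 0 \<Longrightarrow> z = zc k (k-1) \<or> (ee k < z \<and> bet k < poly (FF k) z)"
    "\<And>j. j \<in> {1..k-1} \<Longrightarrow> \<bar>vF k j\<bar> \<le> 5/4"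
    "-1 \<le> zc k (k-1)" "zc k (k-1) \<le> 1"
proof -
  have k2: "2 \<le> k" using k by presburger
  have jj: "1 \<le> k - 1" "k - 1 + 1 \<le> k" using k2 by auto
  show z1: "zc k (k-1) < ee k" using zc_range(2)[OF k(1) jj] unfolding ee_def by simp
  show "-1 \<le> zc k (k-1)" "zc k (k-1) \<le> 1" using zc_range[OF k(1) jj] by auto
  have "odd (k - 1)" using k2 k(2) by simp
  then have "(vF k (k-1) + 1) * 4 < hi k (k-1)" using vF_window(2)[OF k(1) jj] by simp
  then show "vF k (k-1) < bet k" unfolding bet_def ee_def by simp
  have eb: "-1 \<le> ee k" "ee k \<le> 1" unfolding ee_def using lohi_bounds by auto
  then show "-5/4 \<le> bet k" "bet k \<le> -3/4" unfolding bet_def by auto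
  show j2: "ee k < zc k j \<and> bet k < vF k j" if j: "j \<in> {1..k-2}" for j
  proof -
    have j': "1 \<le> j" "j + 1 \<le> k" using j k2 by auto
    have "hi k (k-1) \<le> lo k j" by (rule hi_le_lo) (use j k2 in auto)
    then have "ee k < zc k j" using zc_range(1)[OF k(1) j'] unfolding ee_def by simp
    moreover have "-1 + zc k j / 4 \<le> vF k j" by (rule vF_bounds(1)[OF k(1) j'])
    ultimately show ?thesis unfolding bet_def by simp
  qed
  show "\<bar>vF k j\<bar> \<le> 5/4" if "j \<in> {1..k-1}" for j
    by (rule vF_bounds(3)) (use that k in auto)
  show "w < ee k" if w: "poly (FF k) w \<le> bet k" for w
  proof (rule ccontr)
    assume "\<not> w < ee k"
    then have we: "ee k \<le> w" by simp
    show False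
    proof (cases "1 < w")
      case True then show False using FF_right[OF k(1), of w] w eb unfolding bet_def by simp
    next
      case False
      show False
      proof (cases "w = ee k")
        case True
        have "poly (cheb k) (hi k (k-1)) = 0" by (rule cheb_hi) (use jj in auto)
        then have "poly (FF k) w = ee k / 4" using True by (simp add: poly_FF ee_def)
        then show False using w unfolding bet_def by simp
      next
        case False
        then have "ee k < w" using we by simp
        then show False using FF_mid[of w k] w eb \<open>\<not> 1 < w\<close> unfolding bet_def by auto
      qed
    qed
  qed
  show "z = zc k (k-1) \<or> (ee k < z \<and> bet k < poly (FF k) z)" if z: "poly (pderiv (FF k)) z = 0" for z
  proof -
    obtain j where j: "j \<in> {1..k-1}" "z = zc k j" using real_crit[OF k(1) z] by blast
    show ?thesis
    proof (cases "j = k - 1")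
      case True then show ?thesis using j by simp
    next
      case False
      then have "j \<in> {1..k-2}" using j by auto
      then show ?thesis using j2 j by (auto simp: vF_def)
    qed
  qed
qed

lemma conn_even:
  assumes k: "1 \<le> k" "even k"
  shows "connected {(u, w). poly (cheb (4*k)) u = ss k w}"
proof -
  note E = even_facts[OF k]
  let ?zs = "zc k (k-1)"
  let ?F = "poly (FF k)"
  have s: "ss k = (\<lambda>w. (bet k + 2 - poly (FF k) w) / 2)" using k by (auto simp: ss_def)
  let ?L = "{w. w \<le> ?zs \<and> bet k \<le> ?F w \<and> ?F w \<le> bet k + 4}"
  let ?R = "{w. ?zs \<le> w \<and> bet k \<le> ?F w \<and> ?F w \<le> bet k + 4}"
  have critv: "bet k < ?F z \<and> ?F z \<le> bet k + 4" if zz: "poly (pderiv (FF k)) z = 0" "z \<noteq> ?zs" for z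
  proof -
    have "bet k < ?F z" using E(7)[OF zz(1)] zz(2) by auto
    moreover obtain j where j: "j \<in> {1..k-1}" "z = zc k j" using real_crit[OF k(1) zz(1)] by blast
    then have "?F z \<le> 5/4" using E(8)[OF j(1)] by (auto simp: vF_def)
    ultimately show ?thesis using E(4) by simp
  qed
  have L: "connected ?L"
  proof (rule level_conn)
    show "is_interval {w. w \<le> ?zs}" unfolding is_interval_1 by auto
    fix z w1 w3 assume "w1 \<le> ?zs" "w3 \<le> ?zs" "w1 < z" "z < w3" "poly (pderiv (FF k)) z = 0"
    then show "bet k \<le> ?F z \<and> ?F z \<le> bet k + 4" using critv[of z] by auto
  qed
  have R: "connected ?R"
  proof (rule level_conn)
    show "is_interval {w. ?zs \<le> w}" unfolding is_interval_1 by auto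
    fix z w1 w3 assume "?zs \<le> w1" "?zs \<le> w3" "w1 < z" "z < w3" "poly (pderiv (FF k)) z = 0"
    then show "bet k \<le> ?F z \<and> ?F z \<le> bet k + 4" using critv[of z] by auto
  qed
  have Wt: "connected {w. 1 \<le> ss k w}"
  proof -
    have "is_interval {w. w < ee k \<and> ?F w \<le> bet k}"
    proof (rule level_upper_conn)
      show "is_interval {w. w < ee k}" unfolding is_interval_1 by auto
      fix z w1 w3 assume h: "w1 < ee k" "w3 < ee k" "w1 < z" "z < w3" "poly (pderiv (FF k)) z = 0"
      then have "z = ?zs" using E(7)[OF h(5)] by auto
      then show "?F z \<le> bet k" using E(2) by (simp add: vF_def)
    qed
    moreover have "{w. 1 \<le> ss k w} = {w. w < ee k \<and> ?F w \<le> bet k}"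
      unfolding s using E(6) by auto
    ultimately show ?thesis by (simp add: is_interval_connected_1)
  qed
  have Fzs: "?F ?zs < bet k" using E(2) by (simp add: vF_def)
  have Fm5: "bet k + 4 \<le> ?F (-5)" using FF_left_even[OF k, of "-5"] E(5) by simp
  have F5: "bet k + 4 \<le> ?F 5" using FF_right[OF k(1), of 5] E(5) by simp
  have zsb: "-5 \<le> ?zs" "?zs \<le> 5" using E(9,10) by auto
  have ivl: "\<exists>x. -5 \<le> x \<and> x \<le> ?zs \<and> ?F x = y" if "bet k \<le> y" "y \<le> bet k + 4" for y
    by (rule IVT2') (use that Fzs Fm5 zsb in \<open>auto intro: continuous_intros\<close>)
  have ivr: "\<exists>x. ?zs \<le> x \<and> x \<le> 5 \<and> ?F x = y" if "bet k \<le> y" "y \<le> bet k + 4" for y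
    by (rule IVT') (use that Fzs F5 zsb in \<open>auto intro: continuous_intros\<close>)
  obtain p where p: "-5 \<le> p" "p \<le> ?zs" "?F p = bet k" using ivl[of "bet k"] by auto
  obtain p' where p': "-5 \<le> p'" "p' \<le> ?zs" "?F p' = bet k + 4" using ivl[of "bet k + 4"] by auto
  obtain q where q: "?zs \<le> q" "q \<le> 5" "?F q = bet k" using ivr[of "bet k"] by auto
  obtain q' where q': "?zs \<le> q'" "q' \<le> 5" "?F q' = bet k + 4" using ivr[of "bet k + 4"] by auto
  show ?thesis
  proof (rule conn_even_gen[of _ _ ?L ?R p p' q q'])
    show "even (4 * k)" "2 \<le> 4 * k" using k by auto
    show "continuous_on UNIV (ss k)" unfolding s by (intro continuous_intros) auto
    show "{w. \<bar>ss k w\<bar> \<le> 1} = ?L \<union> ?R" unfolding s by auto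
    show "connected ?L" "connected ?R" "connected {w. 1 \<le> ss k w}" by (rule L, rule R, rule Wt)
  qed (use p p' q q' s in auto)
qed

definition cG :: "nat \<Rightarrow> real" where "cG k = (if odd k then 2 else -2)"
definition bG :: "nat \<Rightarrow> real" where "bG k = (if odd k then 0 else bet k + 2)"
definition GG :: "nat \<Rightarrow> real poly" where "GG k = [:bG k:] + smult (cG k) (cheb (4*k))"
definition PP :: "nat \<Rightarrow> real poly poly" where "PP k = sep (FF k) (GG k)"
definition sv :: "nat \<Rightarrow> real \<Rightarrow> real" where "sv k v = (v - bG k) / cG k"

lemma cG_nz: "cG k \<noteq> 0" by (simp add: cG_def)

lemma poly_GG: "poly (GG k) u = bG k + cG k * poly (cheb (4*k)) u"
  by (simp add: GG_def)

lemma ss_sv: "ss k w = sv k (poly (FF k) w)"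
  by (auto simp: ss_def sv_def cG_def bG_def field_simps)

lemma GG_sv: "poly (GG k) u = v \<longleftrightarrow> poly (cheb (4*k)) u = sv k v"
  using cG_nz[of k] by (auto simp: poly_GG sv_def field_simps)

lemma real_part_PP: "real_part (PP k) = {(u, w). poly (cheb (4*k)) u = ss k w}"
  unfolding real_part_def PP_def beval_sep ss_sv
  using GG_sv[of k] by (auto simp: eq_commute[of "poly (GG k) _"])

lemma RO4_cont: "continuous_on UNIV (\<lambda>(u::real, w::real). RO4_embed (u, 1, w))"
proof -
  have nz: "\<And>u::real. u^2 + 1 \<noteq> 0" by (metis power2_less_0 add_less_same_cancel1 less_one not_one_le_zero add.commute le_add_same_cancel2 zero_le_power2 linorder_not_le sum_power2_eq_zero_iff zero_neq_one)
  have eq: "(\<lambda>(u::real, w::real). RO4_embed (u, 1, w)) =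
      (\<lambda>p. ((fst p ^ 2 - 1) / (fst p ^ 2 + 1), 2 * fst p / (fst p ^ 2 + 1), snd p / (fst p ^ 2 + 1) ^ 2))"
    by (auto simp: RO4_embed_def fun_eq_iff)
  show ?thesis unfolding eq by (intro continuous_intros) (auto simp: nz)
qed

lemma connected_RO4:
  assumes "1 \<le> k" shows "connected (closure_real_part_RO4 (PP k))"
proof -
  have c: "connected (real_part (PP k))"
    unfolding real_part_PP using conn_odd[OF assms] conn_even[OF assms] by (cases "odd k") auto
  show ?thesis unfolding closure_real_part_RO4_def
    by (intro connected_imp_connected_closure connected_continuous_image[OF continuous_on_subset[OF RO4_cont] c]) auto
qed

lemma degree_GG: "1 \<le> k \<Longrightarrow> degree (GG k) = 4 * k"
  unfolding GG_def using cG_nz[of k]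
  by (subst degree_add_eq_right) (auto simp: degree_cheb)

lemma cheb_0: "poly (cheb m) 0 = cos (real m * (pi / 2))"
  using cheb_cos[of m "pi/2"] by simp

lemma ee_nz: assumes "even k" "1 \<le> k" shows "ee k \<noteq> 0"
proof
  assume e: "ee k = 0"
  have k2: "2 \<le> k" using assms by presburger
  let ?x = "(real (k - 1) - 1/2) * pi / real k"
  have kp: "0 < real k" using k2 by simp
  have x0: "0 \<le> ?x" using k2 by (simp add: of_nat_diff)
  have x1: "?x \<le> pi" using frac_pi_bounds(2)[of "real (k - 1) - 1/2" k] k2 by (simp add: of_nat_diff)
  have "cos ?x = cos (pi / 2)" using e unfolding ee_def hi_def by simp
  moreover have "0 \<le> pi / 2" "pi / 2 \<le> pi" by simp_all
  ultimately have "?x = pi / 2" using cos_inj_pi[OF x0 x1] by blast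
  then have "(real k - 3/2) * pi = (real k / 2) * pi" using kp k2 by (simp add: of_nat_diff field_simps)
  then have "real k = 3" by simp
  then have "k = 3" by linarith
  then show False using assms by simp
qed

lemma coeff0_ne: assumes "1 \<le> k" shows "coeff (FF k) 0 \<noteq> coeff (GG k) 0"
proof -
  have T0: "poly (cheb (4*k)) 0 = 1"
  proof -
    have "real (4*k) * (pi/2) = real (2*k) * pi" by simp
    then show ?thesis unfolding cheb_0 by (simp only:) (simp add: power_mult)
  qed
  have F0: "coeff (FF k) 0 = cos (real k * (pi / 2))" by (simp flip: poly_0_coeff_0 add: poly_FF cheb_0)
  have G0: "coeff (GG k) 0 = bG k + cG k" by (simp flip: poly_0_coeff_0 add: poly_GG T0)
  show ?thesis
  proof (cases "odd k")
    case True
    then obtain m where m: "k = 2*m + 1" by (metis oddE)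
    have "real k * (pi/2) = real m * pi + pi/2" using m by (simp add: field_simps)
    moreover have "cos (real m * pi + pi/2) = 0" by (simp add: cos_add)
    ultimately have "cos (real k * (pi / 2)) = 0" by (simp only:)
    then show ?thesis using F0 G0 True by (simp add: bG_def cG_def)
  next
    case False
    then obtain m where m: "k = 2*m" by (metis evenE)
    have "real k * (pi/2) = real m * pi" using m by (simp add: field_simps)
    then have c: "cos (real k * (pi / 2)) = (-1)^m" by simp
    have G0': "coeff (GG k) 0 = bet k" using G0 False by (simp add: bG_def cG_def)
    have "(-1::real)^m \<noteq> bet k"
    proof (cases "even m")
      case True then show ?thesis using even_facts(5)[OF assms] False by auto
    next
      case False2: False
      have "bet k \<noteq> -1" using ee_nz[OF _ assms] False unfolding bet_def by auto
      then show ?thesis using False2 by simp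
    qed
    then show ?thesis using F0 G0' c by simp
  qed
qed

lemma newton_PP: "1 \<le> k \<Longrightarrow> newton_polygon (PP k) = convex hull {(0,0), (real (4*k), 0), (0, real k)}"
  unfolding PP_def by (rule newton_polygon_sep) (auto simp: degree_FF degree_GG coeff0_ne)

lemma degree_of_real_map: "degree (map_poly (of_real :: real \<Rightarrow> complex) p) = degree p"
  by (rule degree_map_poly) simp

lemma lead_of_real_map: "lead_coeff (map_poly (of_real :: real \<Rightarrow> complex) p) = of_real (lead_coeff p)"
  by (simp add: degree_of_real_map coeff_map_poly)

lemma squarefree_PP:
  assumes "1 \<le> k" shows "squarefree (principal_part k (complexify (PP k)))"
proof -
  have dF: "degree (map_poly (of_real :: real \<Rightarrow> complex) (FF k)) = k" using degree_FF[OF assms] by (simp add: degree_of_real_map)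
  have dG: "degree (map_poly (of_real :: real \<Rightarrow> complex) (GG k)) = 4 * k" using degree_GG[OF assms] by (simp add: degree_of_real_map)
  have nF: "lead_coeff (FF k) \<noteq> 0" using degree_FF[OF assms] assms by (metis leading_coeff_0_iff degree_0 not_one_le_zero)
  have nG: "lead_coeff (GG k) \<noteq> 0" using degree_GG[OF assms] assms by (metis leading_coeff_0_iff degree_0 mult_is_0 not_one_le_zero zero_neq_numeral)
  show ?thesis
    unfolding PP_def complexify_sep principal_part_sep[OF dF dG assms]
    by (rule squarefree_binom) (use nF nG assms in \<open>auto simp: lead_of_real_map\<close>)
qed

lemma map_poly_of_real_smult: "map_poly (of_real :: real \<Rightarrow> complex) (smult c p) = smult (of_real c) (map_poly of_real p)"
  by (rule poly_eqI) (simp add: coeff_map_poly)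

lemma pderiv_GG: "pderiv (GG k) = smult (cG k) (pderiv (cheb (4*k)))"
  by (simp add: GG_def pderiv_add pderiv_const' pderiv_smult)

lemma QQ0: "QQ n 0 = cheb n" by (simp add: QQ_def)

lemma G_crit:
  assumes k: "1 \<le> k" and u: "poly (pderiv (map_poly (of_real :: real \<Rightarrow> complex) (GG k))) u = 0"
  shows "\<exists>y. u = of_real y \<and> \<bar>poly (cheb (4*k)) y\<bar> = 1"
proof -
  let ?n = "4 * k"
  have n: "1 \<le> ?n" using k by simp
  have "poly (map_poly (of_real :: real \<Rightarrow> complex) (pderiv (QQ ?n 0))) u = 0"
    using u cG_nz[of k] by (simp add: pderiv_of_real_map pderiv_GG map_poly_of_real_smult QQ0)
  then have "u \<in> (\<lambda>j. of_real (critpt ?n 0 j)) ` {1..?n-1}" using crit_all[OF n, of 0] by auto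
  then obtain m where m: "m \<in> {1..?n-1}" "u = of_real (critpt ?n 0 m)" by auto
  have "critP ?n 0 m (critpt ?n 0 m)" by (rule critpt) (use m n in auto)
  then have "\<bar>poly (cheb ?n) (critpt ?n 0 m)\<bar> = 1" unfolding critP_def QQ0 by (cases "even m") auto
  then show ?thesis using m by blast
qed

lemma F_crit:
  assumes k: "1 \<le> k" and w: "poly (pderiv (map_poly (of_real :: real \<Rightarrow> complex) (FF k))) w = 0"
  shows "\<exists>j\<in>{1..k-1}. w = of_real (zc k j)"
proof -
  have "poly (map_poly (of_real :: real \<Rightarrow> complex) (pderiv (QQ k (1/4)))) w = 0"
    using w by (simp add: pderiv_of_real_map FF_def)
  then have "w \<in> (\<lambda>j. of_real (critpt k (1/4) j)) ` {1..k-1}" using crit_all[OF k, of "1/4"] by auto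
  then show ?thesis unfolding zc_def by auto
qed

lemma nonsing_PP:
  assumes k: "1 \<le> k" shows "nonsingular_C2 (complexify (PP k))"
  unfolding nonsingular_C2_def PP_def complexify_sep bderiv_u_sep bderiv_w_sep beval_sep
proof (intro allI impI)
  fix u w :: complex
  let ?Fc = "map_poly (of_real :: real \<Rightarrow> complex) (FF k)" and ?Gc = "map_poly (of_real :: real \<Rightarrow> complex) (GG k)"
  assume eq: "poly ?Fc w - poly ?Gc u = 0"
  show "poly 0 w - poly (pderiv ?Gc) u \<noteq> 0 \<or> poly (pderiv ?Fc) w - poly 0 u \<noteq> 0"
  proof (rule ccontr)
    assume "\<not> ?thesis"
    then have du: "poly (pderiv ?Gc) u = 0" and dw: "poly (pderiv ?Fc) w = 0" by auto
    obtain y where y: "u = of_real y" "\<bar>poly (cheb (4*k)) y\<bar> = 1" using G_crit[OF k du] by blast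
    obtain j where j: "j \<in> {1..k-1}" "w = of_real (zc k j)" using F_crit[OF k dw] by blast
    have "complex_of_real (vF k j) = of_real (poly (GG k) y)"
      using eq y j by (simp add: poly_of_real_map vF_def)
    then have "vF k j = poly (GG k) y" using of_real_eq_iff by blast
    then have v: "vF k j = bG k + cG k * poly (cheb (4*k)) y" by (simp add: poly_GG)
    have b: "\<bar>vF k j\<bar> \<le> 5/4" by (rule vF_bounds(3)) (use j k in auto)
    show False
    proof (cases "odd k")
      case True
      then show False using v b y(2) by (auto simp: bG_def cG_def abs_mult)
    next
      case False
      have "poly (cheb (4*k)) y = 1 \<or> poly (cheb (4*k)) y = -1" using y(2) by auto
      then show False
      proof
        assume "poly (cheb (4*k)) y = 1"
        then have "vF k j = bet k" using v False by (simp add: bG_def cG_def)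
        moreover have "vF k j \<noteq> bet k"
        proof (cases "j = k - 1")
          case True then show ?thesis using even_facts(2)[OF k] False by simp
        next
          case False2: False
          then have "j \<in> {1..k-2}" using j by auto
          then show ?thesis using even_facts(3)[OF k] False by force
        qed
        ultimately show False by simp
      next
        assume "poly (cheb (4*k)) y = -1"
        then have "vF k j = bet k + 4" using v False by (simp add: bG_def cG_def)
        then show False using b even_facts(4)[OF k] False by simp
      qed
    qed
  qed
qed

definition VV :: "nat \<Rightarrow> real set" where
  "VV k = {c. \<exists>w. beval (complexify (PP k)) (complex_of_real c) w = 0 \<and>
                  beval (bderiv_w (complexify (PP k))) (complex_of_real c) w = 0}"

lemma VV_eq: assumes k: "1 \<le> k" shows "VV k = {c. \<exists>j\<in>{1..k-1}. poly (GG k) c = vF k j}"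
proof (rule set_eqI, rule iffI)
  fix c assume "c \<in> VV k"
  then obtain w where w: "poly (map_poly of_real (FF k)) w - poly (map_poly of_real (GG k)) (complex_of_real c) = 0"
      "poly (pderiv (map_poly (of_real :: real \<Rightarrow> complex) (FF k))) w = 0"
    unfolding VV_def PP_def complexify_sep bderiv_w_sep beval_sep by auto
  obtain j where j: "j \<in> {1..k-1}" "w = of_real (zc k j)" using F_crit[OF k w(2)] by blast
  have "complex_of_real (vF k j) = of_real (poly (GG k) c)" using w(1) j by (simp add: poly_of_real_map vF_def)
  then have "poly (GG k) c = vF k j" using of_real_eq_iff by metis
  then show "c \<in> {c. \<exists>j\<in>{1..k-1}. poly (GG k) c = vF k j}" using j by auto
next
  fix c assume "c \<in> {c. \<exists>j\<in>{1..k-1}. poly (GG k) c = vF k j}"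
  then obtain j where j: "j \<in> {1..k-1}" "poly (GG k) c = vF k j" by auto
  have "critP k (1/4) j (zc k j)" by (rule zc_props) (use j k in auto)
  then have d: "poly (pderiv (FF k)) (zc k j) = 0" unfolding critP_def FF_def by simp
  let ?w = "complex_of_real (zc k j)"
  have "beval (complexify (PP k)) (complex_of_real c) ?w = 0"
    unfolding PP_def complexify_sep beval_sep using j by (simp add: poly_of_real_map vF_def)
  moreover have "beval (bderiv_w (complexify (PP k))) (complex_of_real c) ?w = 0"
    unfolding PP_def complexify_sep bderiv_w_sep beval_sep using d by (simp add: poly_of_real_map pderiv_of_real_map)
  ultimately show "c \<in> VV k" unfolding VV_def by blast
qed

lemma root_set_bound:
  assumes k: "1 \<le> k" shows "finite {c. poly (GG k) c = v} \<and> card {c. poly (GG k) c = v} \<le> 4 * k"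
proof -
  have d: "degree (GG k + [:- v:]) = 4 * k" using degree_GG[OF k] k by (subst degree_add_eq_left) auto
  then have nz: "GG k + [:- v:] \<noteq> 0" using k by auto
  have eq: "{c. poly (GG k) c = v} = {c. poly (GG k + [:- v:]) c = 0}" by auto
  show ?thesis unfolding eq using poly_roots_finite[OF nz] card_poly_roots_bound[OF nz] d by simp
qed

lemma VV_upper: assumes k: "1 \<le> k" shows "finite (VV k) \<and> card (VV k) \<le> (k - 1) * (4 * k)"
proof -
  have eq: "VV k = (\<Union>j\<in>{1..k-1}. {c. poly (GG k) c = vF k j})" unfolding VV_eq[OF k] by auto
  have fin: "finite (VV k)" unfolding eq using root_set_bound[OF k] by auto
  have "card (VV k) \<le> (\<Sum>j\<in>{1..k-1}. card {c. poly (GG k) c = vF k j})"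
    unfolding eq by (rule card_UN_le) simp
  also have "\<dots> \<le> card {1..k-1} * (4 * k)"
    using sum_bounded_above[of "{1..k-1}" "\<lambda>j. card {c. poly (GG k) c = vF k j}" "4 * k"] root_set_bound[OF k] by simp
  finally show ?thesis using fin by simp
qed

lemma sv_window:
  assumes k: "1 \<le> k" and j: "j \<in> {1..k-2}"
  shows "-1 < sv k (vF k j) \<and> sv k (vF k j) < 1"
proof (cases "odd k")
  case True
  have "\<bar>vF k j\<bar> \<le> 5/4" by (rule vF_bounds(3)) (use j k in auto)
  then show ?thesis using True by (auto simp: sv_def bG_def cG_def)
next
  case False
  have "bet k < vF k j" using even_facts(3)[OF k] False j by auto
  moreover have "\<bar>vF k j\<bar> \<le> 5/4" by (rule vF_bounds(3)) (use j k in auto)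
  moreover have "-5/4 \<le> bet k" using even_facts(4)[OF k] False by auto
  ultimately show ?thesis using False by (auto simp: sv_def bG_def cG_def field_simps)
qed

definition ff :: "nat \<Rightarrow> nat \<times> nat \<Rightarrow> real" where
  "ff k = (\<lambda>(j, m). cos ((real m * pi + arccos ((-1)^m * sv k (vF k j))) / real (4 * k)))"

lemma arccos_window:
  assumes "-1 < y" "y < 1" "1 \<le> n" "m < n"
  shows "real m * pi / real n < (real m * pi + arccos y) / real n"
    "(real m * pi + arccos y) / real n < (real m + 1) * pi / real n"
    "0 \<le> (real m * pi + arccos y) / real n" "(real m * pi + arccos y) / real n \<le> pi"
proof -
  have a: "0 < arccos y" "arccos y < pi" using arccos_lt_bounded[OF assms(1,2)] by auto
  have np: "0 < real n" using assms by simp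
  show l: "real m * pi / real n < (real m * pi + arccos y) / real n" using a np by (simp add: divide_strict_right_mono)
  show r: "(real m * pi + arccos y) / real n < (real m + 1) * pi / real n" using a np by (simp add: divide_strict_right_mono algebra_simps)
  show "0 \<le> (real m * pi + arccos y) / real n" using a np by simp
  have "(real m + 1) * pi / real n \<le> pi" using frac_pi_bounds(2)[of "real m + 1" n] assms by simp
  then show "(real m * pi + arccos y) / real n \<le> pi" using r by simp
qed

lemma ff_props:
  assumes k: "1 \<le> k" and j: "j \<in> {1..k-2}" and m: "m < 4 * k"
  shows "poly (GG k) (ff k (j, m)) = vF k j"
    and "real m * pi / real (4*k) < (real m * pi + arccos ((-1)^m * sv k (vF k j))) / real (4 * k)"
    and "(real m * pi + arccos ((-1)^m * sv k (vF k j))) / real (4 * k) < (real m + 1) * pi / real (4*k)"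
    and "0 \<le> (real m * pi + arccos ((-1)^m * sv k (vF k j))) / real (4 * k)"
    and "(real m * pi + arccos ((-1)^m * sv k (vF k j))) / real (4 * k) \<le> pi"
proof -
  have w: "-1 < sv k (vF k j) \<and> sv k (vF k j) < 1" by (rule sv_window[OF k j])
  have y: "-1 < (-1)^m * sv k (vF k j)" "(-1)^m * sv k (vF k j) < 1" proof -
    have s: "(-1::real)^m = (if even m then 1 else -1)" by simp
    show "-1 < (-1)^m * sv k (vF k j)" "(-1)^m * sv k (vF k j) < 1" using w unfolding s by auto
  qed
  have n: "1 \<le> 4 * k" using k by simp
  have "(ff k (j, m), 0) \<in> piece (4*k) m (\<lambda>_. sv k (vF k j)) {0}"
    by (rule piece_mem) (auto simp: ff_def)
  then have "poly (cheb (4*k)) (ff k (j, m)) = sv k (vF k j)"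
    using piece_sub[OF n, of "ff k (j, m)" 0 m "\<lambda>_. sv k (vF k j)" "{0}"] w by auto
  then show "poly (GG k) (ff k (j, m)) = vF k j" using GG_sv by blast
  note aw = arccos_window[OF y n m]
  show "real m * pi / real (4*k) < (real m * pi + arccos ((-1)^m * sv k (vF k j))) / real (4 * k)"
    "(real m * pi + arccos ((-1)^m * sv k (vF k j))) / real (4 * k) < (real m + 1) * pi / real (4*k)"
    "0 \<le> (real m * pi + arccos ((-1)^m * sv k (vF k j))) / real (4 * k)"
    "(real m * pi + arccos ((-1)^m * sv k (vF k j))) / real (4 * k) \<le> pi"
    using aw by auto
qed

lemma ff_inj: assumes k: "1 \<le> k" shows "inj_on (ff k) ({1..k-2} \<times> {..<4*k})"
proof (rule inj_onI, clarify)
  fix j m j' m' assume j: "j \<in> {1..k-2}" "m < 4*k" and j': "j' \<in> {1..k-2}" "m' < 4*k"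
    and eq: "ff k (j, m) = ff k (j', m')"
  have "vF k j = vF k j'" using ff_props(1)[OF k j] ff_props(1)[OF k j'] eq by metis
  then have jj: "j = j'" by (rule vF_inj[OF k, rotated 2]) (use j j' in auto)
  let ?a = "\<lambda>m. (real m * pi + arccos ((-1)^m * sv k (vF k j))) / real (4 * k)"
  have "cos (?a m) = cos (?a m')" using eq jj by (simp add: ff_def)
  then have aeq: "?a m = ?a m'"
    by (rule cos_inj_pi[OF ff_props(4)[OF k j(1) j(2)] ff_props(5)[OF k j(1) j(2)]
          ff_props(4)[OF k j(1) j'(2)] ff_props(5)[OF k j(1) j'(2)]])
  have np: "0 < real (4*k)" using k by simp
  have mono: "\<And>a b. a < b \<Longrightarrow> b < 4 * k \<Longrightarrow> ?a a < ?a b"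
  proof -
    fix a b assume ab: "a < b" "b < 4 * k"
    have "?a a < (real a + 1) * pi / real (4*k)" using ff_props(3)[OF k j(1)] ab by simp
    also have "\<dots> \<le> real b * pi / real (4*k)"
      using ab np by (intro divide_right_mono mult_right_mono) auto
    also have "\<dots> < ?a b" using ff_props(2)[OF k j(1) ab(2)] by simp
    finally show "?a a < ?a b" .
  qed
  have "m = m'" using mono[of m m'] mono[of m' m] aeq j(2) j'(2) by (cases m m' rule: linorder_cases) auto
  then show "j = j' \<and> m = m'" using jj by simp
qed

lemma VV_lower: assumes k: "1 \<le> k" shows "(k - 2) * (4 * k) \<le> card (VV k)"
proof -
  have sub: "ff k ` ({1..k-2} \<times> {..<4*k}) \<subseteq> VV k"
  proof
    fix c assume "c \<in> ff k ` ({1..k-2} \<times> {..<4*k})"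
    then obtain j m where jm: "j \<in> {1..k-2}" "m < 4 * k" "c = ff k (j, m)" by auto
    have "poly (GG k) c = vF k j" using ff_props(1)[OF k jm(1,2)] jm(3) by simp
    moreover have "j \<in> {1..k-1}" using jm(1) by auto
    ultimately show "c \<in> VV k" unfolding VV_eq[OF k] by auto
  qed
  have "card (ff k ` ({1..k-2} \<times> {..<4*k})) = (k - 2) * (4 * k)"
    using card_image[OF ff_inj[OF k]] by (simp add: card_cartesian_product)
  then show ?thesis using card_mono[OF conjunct1[OF VV_upper[OF k]] sub] by simp
qed

lemma count_bound: assumes k: "1 \<le> k"
  shows "\<bar>real (card (VV k)) - 4 * (real k)^2\<bar> \<le> 8 * real k"
proof -
  have u: "card (VV k) \<le> (k - 1) * (4 * k)" using VV_upper[OF k] by simp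
  have l: "(k - 2) * (4 * k) \<le> card (VV k)" by (rule VV_lower[OF k])
  have u': "real (card (VV k)) \<le> 4 * (real k)^2"
  proof -
    have "(k - 1) * (4 * k) \<le> 4 * k * k" by simp
    then have "card (VV k) \<le> 4 * k * k" using u by linarith
    then have "real (card (VV k)) \<le> real (4 * k * k)" by linarith
    then show ?thesis by (simp add: power2_eq_square)
  qed
  have l': "4 * (real k)^2 - 8 * real k \<le> real (card (VV k))"
  proof (cases "2 \<le> k")
    case True
    have "real ((k - 2) * (4 * k)) = (real k - 2) * (4 * real k)" using True by (simp add: of_nat_diff)
    then show ?thesis using l by (simp add: power2_eq_square algebra_simps)
  next
    case False
    then have "k = 1" using k by simp
    then show ?thesis by simp
  qed
  show ?thesis using u' l' by linarith
qed

theorem proposition4p7: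
  shows "\<exists>C :: nat \<Rightarrow> real poly poly.
     (\<forall>k\<ge>1. real_nonsingular_k_section k (C k) \<and> connected (closure_real_part_RO4 (C k))) \<and>
     (\<exists>M :: real. \<forall>k\<ge>1.
        \<bar>real (num_real_vertical_tangents (C k)) - 4 * (real k)^2\<bar> \<le> M * real k)"
proof (intro exI[of _ PP] conjI allI impI)
  fix k :: nat assume k: "1 \<le> k"
  show "real_nonsingular_k_section k (PP k)"
    unfolding real_nonsingular_k_section_def using newton_PP[OF k] nonsing_PP[OF k] squarefree_PP[OF k] by simp
  show "connected (closure_real_part_RO4 (PP k))" by (rule connected_RO4[OF k])
next
  show "\<exists>M :: real. \<forall>k\<ge>1. \<bar>real (num_real_vertical_tangents (PP k)) - 4 * (real k)^2\<bar> \<le> M * real k"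
  proof (intro exI[of _ 8] allI impI)
    fix k :: nat assume k: "1 \<le> k"
    have "num_real_vertical_tangents (PP k) = card (VV k)"
      by (simp add: num_real_vertical_tangents_def VV_def)
    then show "\<bar>real (num_real_vertical_tangents (PP k)) - 4 * (real k)^2\<bar> \<le> 8 * real k"
      using count_bound[OF k] by simp
  qed
qed

end
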